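(* Let $k\ge 3$, let $1\le i\le n-2$, and let $H_1,\dots,H_k$ be $i$-dimensional linear subspaces of $\mathbb{R}^n$. Set $d=i$ and $M_j=H_j$ for all $j$ if $2\le i\le n/2$, and set $d=n-i$ and $M_j=H_j^\perp$ for all $j$ if $n/2<i\le n-2$. Assume that: (i) there exist an orthonormal basis $e_1,\dots,e_n$ of $\mathbb{R}^n$ and numbers $0<\alpha_1<\cdots<\alpha_d<\pi/2$ such that $\pi,\alpha_1,\dots,\alpha_d$ are linearly independent over $\mathbb{Q}$ and $$M_1=\mathrm{lin}\{e_1,e_3,\dots,e_{2d-1}\},\quad M_2=\mathrm{lin}\{\cos\alpha_j\, e_{2j-1}+\sin\alpha_j\, e_{2j}: j=1,\dots,d\},$$ $$M_3=\mathrm{lin}\big(\{\cos\alpha_1\, e_1+\sin\alpha_1\, e_{2d}\}\cup\{\cos\alpha_j\, e_{2j-1}+\sin\alpha_j\, e_{2j-2}: j=2,\dots,d\}\big);$$ (ii) $M_1+\cdots+M_k=\mathbb{R}^n$; (iii) for each $j=3,\dots,k-1$, $M_{j+1}\cap(M_1+\cdots+M_j)^\perp=\{o\}$. If $E\subset S^{n-1}$ is nonempty, closed, and such that $R_{H_j}E=E$ for $j=1,\dots,k$, then $E=S^{n-1}$.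
   Context: For a linear subspace $H$ of $\mathbb{R}^n$, $R_H$ is the reflection $x\mapsto 2(x|H)-x$, with $x|H$ the orthogonal projection onto $H$; $H^\perp$ is the orthogonal complement; $\mathrm{lin}$ denotes linear hull; $o$ is the origin; $S^{n-1}$ is the unit sphere. *)

theory Defs
  imports "HOL-Analysis.Analysis"
begin

definition orth_proj :: "'a::euclidean_space set \<Rightarrow> 'a \<Rightarrow> 'a" where
  "orth_proj H x = (THE y. y \<in> H \<and> x - y \<in> orthogonal_comp H)"

definition refl_sub :: "'a::euclidean_space set \<Rightarrow> 'a \<Rightarrow> 'a" where
  "refl_sub H x = 2 *\<^sub>R orth_proj H x - x"

definition pi_alphas_Q_indep :: "nat \<Rightarrow> (nat \<Rightarrow> real) \<Rightarrow> bool" where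
  "pi_alphas_Q_indep d \<alpha> \<longleftrightarrow>
     (\<forall>q :: nat \<Rightarrow> rat.
        of_rat (q 0) * pi + (\<Sum>j=1..d. of_rat (q j) * \<alpha> j) = 0 \<longrightarrow> (\<forall>j\<in>{0..d}. q j = 0))"

end

theory Submission
  imports Defs
begin


lemma proj_exists:
  fixes H :: "'a::euclidean_space set"
  assumes "subspace H"
  shows "\<exists>y. y \<in> H \<and> x - y \<in> orthogonal_comp H"
proof -
  obtain y z where y: "y \<in> span H" and z: "\<And>w. w \<in> span H \<Longrightarrow> orthogonal z w" and xyz: "x = y + z"
    using orthogonal_subspace_decomp_exists[of H x] by blast
  have "y \<in> H" using y span_eq_iff[THEN iffD2, OF assms] by simp
  moreover have "x - y \<in> orthogonal_comp H"
    using z xyz span_superset[of H] by (auto simp: orthogonal_comp_def orthogonal_commute)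
  ultimately show ?thesis by blast
qed

lemma proj_unique:
  fixes H :: "'a::euclidean_space set"
  assumes "subspace H" "y \<in> H" "\<And>h. h \<in> H \<Longrightarrow> (x - y) \<bullet> h = 0"
  shows "orth_proj H x = y"
proof -
  have y: "y \<in> H \<and> x - y \<in> orthogonal_comp H"
    using assms by (auto simp: orthogonal_comp_def orthogonal_def inner_commute)
  have uniq: "y' = y" if "y' \<in> H \<and> x - y' \<in> orthogonal_comp H" for y'
  proof -
    have "y' - y \<in> H" using that assms subspace_diff by blast
    moreover have "(x - y) \<bullet> (y' - y) = 0" "(x - y') \<bullet> (y' - y) = 0"
      using that y \<open>y' - y \<in> H\<close> by (auto simp: orthogonal_comp_def orthogonal_def inner_commute)
    then have "(y' - y) \<bullet> (y' - y) = 0" by (simp add: inner_diff_left inner_diff_right)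
    then show ?thesis by simp
  qed
  show ?thesis unfolding orth_proj_def
    using y uniq by (rule the_equality)
qed

lemma proj_in:
  fixes H :: "'a::euclidean_space set"
  assumes "subspace H"
  shows "orth_proj H x \<in> H"
proof -
  obtain y where "y \<in> H" "x - y \<in> orthogonal_comp H" using proj_exists[OF assms] by blast
  then have "orth_proj H x = y"
    by (intro proj_unique[OF assms]) (auto simp: orthogonal_comp_def orthogonal_def inner_commute)
  with \<open>y \<in> H\<close> show ?thesis by simp
qed

lemma proj_orth:
  fixes H :: "'a::euclidean_space set"
  assumes "subspace H" "h \<in> H"
  shows "(x - orth_proj H x) \<bullet> h = 0"
proof -
  obtain y where "y \<in> H" "x - y \<in> orthogonal_comp H" using proj_exists[OF assms(1)] by blast
  then have "orth_proj H x = y"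
    by (intro proj_unique[OF assms(1)]) (auto simp: orthogonal_comp_def orthogonal_def inner_commute)
  with \<open>x - y \<in> orthogonal_comp H\<close> assms(2) show ?thesis
    by (auto simp: orthogonal_comp_def orthogonal_def inner_commute)
qed

lemma proj_inner:
  fixes H :: "'a::euclidean_space set"
  assumes "subspace H" "h \<in> H"
  shows "orth_proj H x \<bullet> h = x \<bullet> h"
  using proj_orth[OF assms, of x] by (simp add: inner_diff_left)

lemma proj_linear:
  fixes H :: "'a::euclidean_space set"
  assumes "subspace H"
  shows "linear (orth_proj H)"
proof
  fix x y show "orth_proj H (x + y) = orth_proj H x + orth_proj H y"
  proof (rule proj_unique[OF assms])
    show "orth_proj H x + orth_proj H y \<in> H"
      by (intro subspace_add[OF assms] proj_in[OF assms])
    fix h assume h: "h \<in> H"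
    have "x + y - (orth_proj H x + orth_proj H y) = (x - orth_proj H x) + (y - orth_proj H y)"
      by simp
    then show "(x + y - (orth_proj H x + orth_proj H y)) \<bullet> h = 0"
      using proj_orth[OF assms h, of x] proj_orth[OF assms h, of y] by (simp only: inner_add_left)
  qed
next
  fix c x show "orth_proj H (c *\<^sub>R x) = c *\<^sub>R orth_proj H x"
  proof (rule proj_unique[OF assms])
    show "c *\<^sub>R orth_proj H x \<in> H"
      by (intro subspace_scale[OF assms] proj_in[OF assms])
    fix h assume h: "h \<in> H"
    have "c *\<^sub>R x - c *\<^sub>R orth_proj H x = c *\<^sub>R (x - orth_proj H x)"
      by (simp add: scaleR_diff_right)
    then show "(c *\<^sub>R x - c *\<^sub>R orth_proj H x) \<bullet> h = 0"
      using proj_orth[OF assms h, of x] by simp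
  qed
qed

lemma proj_pyth:
  fixes H :: "'a::euclidean_space set"
  assumes "subspace H"
  shows "(norm x)\<^sup>2 = (norm (orth_proj H x))\<^sup>2 + (norm (x - orth_proj H x))\<^sup>2"
proof -
  have "orthogonal (orth_proj H x) (x - orth_proj H x)"
    using proj_orth[OF assms proj_in[OF assms], of x] by (simp add: orthogonal_def inner_commute)
  from norm_add_Pythagorean[OF this] show ?thesis by simp
qed

lemma proj_comp:
  fixes H :: "'a::euclidean_space set"
  assumes "subspace H"
  shows "orth_proj (orthogonal_comp H) x = x - orth_proj H x"
proof (rule proj_unique[OF subspace_orthogonal_comp])
  show "x - orth_proj H x \<in> orthogonal_comp H"
    using proj_orth[OF assms] by (auto simp: orthogonal_comp_def orthogonal_def inner_commute)
  fix h assume "h \<in> orthogonal_comp H"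
  then show "(x - (x - orth_proj H x)) \<bullet> h = 0"
    using proj_in[OF assms] by (auto simp: orthogonal_comp_def orthogonal_def)
qed

lemma refl_comp:
  fixes H :: "'a::euclidean_space set"
  assumes "subspace H"
  shows "refl_sub (orthogonal_comp H) x = - refl_sub H x"
  unfolding refl_sub_def proj_comp[OF assms] by (simp add: algebra_simps scaleR_2)

lemma refl_linear:
  fixes H :: "'a::euclidean_space set"
  assumes "subspace H"
  shows "linear (refl_sub H)"
proof -
  interpret linear "orth_proj H" using proj_linear[OF assms] .
  show ?thesis apply unfold_locales
     apply (simp add: refl_sub_def add algebra_simps)
    by (simp add: refl_sub_def scale scaleR_diff_right)
qed

lemma refl_invol:
  fixes H :: "'a::euclidean_space set"
  assumes "subspace H"
  shows "refl_sub H (refl_sub H x) = x"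
proof -
  interpret linear "orth_proj H" using proj_linear[OF assms] .
  have "orth_proj H (orth_proj H x) = orth_proj H x"
    by (rule proj_unique[OF assms proj_in[OF assms]]) simp
  moreover have "(4::real) *\<^sub>R p = 2 *\<^sub>R p + 2 *\<^sub>R p" for p :: 'a
    by (simp flip: scaleR_add_left)
  ultimately show ?thesis by (simp add: refl_sub_def diff scale algebra_simps)
qed

lemma refl_norm:
  fixes H :: "'a::euclidean_space set"
  assumes "subspace H"
  shows "norm (refl_sub H x) = norm x"
proof -
  have e: "refl_sub H x = orth_proj H x + (-(x - orth_proj H x))"
    by (simp add: refl_sub_def algebra_simps scaleR_2)
  have o0: "(x - orth_proj H x) \<bullet> orth_proj H x = 0" using proj_orth[OF assms proj_in[OF assms]] .
  have o: "orthogonal (orth_proj H x) (-(x - orth_proj H x))"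
    unfolding orthogonal_def inner_minus_right using o0
    by (simp add: inner_commute[of "orth_proj H x" "x - orth_proj H x"])
  have "(norm (refl_sub H x))\<^sup>2 = (norm (orth_proj H x))\<^sup>2 + (norm (-(x - orth_proj H x)))\<^sup>2"
    unfolding e by (rule norm_add_Pythagorean[OF o])
  then have "(norm (refl_sub H x))\<^sup>2 = (norm x)\<^sup>2"
    using proj_pyth[OF assms, of x] by (simp only: norm_minus_cancel)
  then show ?thesis by (rule power2_eq_imp_eq) simp_all
qed

lemma refl_orth_zero:
  fixes H :: "'a::euclidean_space set"
  assumes "subspace H" "\<And>h. h \<in> H \<Longrightarrow> x \<bullet> h = 0"
  shows "refl_sub H x = - x"
proof -
  have "orth_proj H x = 0" by (rule proj_unique[OF assms(1) subspace_0[OF assms(1)]]) (use assms in auto)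
  then show ?thesis by (simp add: refl_sub_def)
qed

lemma proj_orthonormal:
  fixes f :: "nat \<Rightarrow> 'a::euclidean_space"
  assumes J: "finite J" and on: "\<And>i j. i \<in> J \<Longrightarrow> j \<in> J \<Longrightarrow> f i \<bullet> f j = (if i = j then 1 else 0)"
  shows "orth_proj (span (f ` J)) x = (\<Sum>j\<in>J. (x \<bullet> f j) *\<^sub>R f j)"
proof (rule proj_unique)
  show "(\<Sum>j\<in>J. (x \<bullet> f j) *\<^sub>R f j) \<in> span (f ` J)"
    by (intro span_sum span_scale span_base) auto
  have z: "(x - (\<Sum>j\<in>J. (x \<bullet> f j) *\<^sub>R f j)) \<bullet> f i = 0" if "i \<in> J" for i
  proof -
    have "(\<Sum>j\<in>J. (x \<bullet> f j) *\<^sub>R f j) \<bullet> f i = (\<Sum>j\<in>J. (x \<bullet> f j) * (if j = i then 1 else 0))"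
      by (simp add: inner_sum_left on that)
    also have "\<dots> = x \<bullet> f i" using that J by (simp add: if_distrib sum.delta cong: if_cong)
    finally show ?thesis by (simp add: inner_diff_left)
  qed
  fix h assume h: "h \<in> span (f ` J)"
  have "orthogonal (x - (\<Sum>j\<in>J. (x \<bullet> f j) *\<^sub>R f j)) h"
    using h
  proof (rule orthogonal_to_span)
    fix y assume "y \<in> f ` J"
    then obtain i where "i \<in> J" "y = f i" by blast
    then show "orthogonal (x - (\<Sum>j\<in>J. (x \<bullet> f j) *\<^sub>R f j)) y"
      using z by (simp add: orthogonal_def)
  qed
  then show "(x - (\<Sum>j\<in>J. (x \<bullet> f j) *\<^sub>R f j)) \<bullet> h = 0"
    by (simp add: orthogonal_def)
qed (rule subspace_span)



definition claim :: "'a::euclidean_space set \<Rightarrow> 'a set \<Rightarrow> bool" where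
  "claim E X \<longleftrightarrow> (\<forall>x\<in>E. \<forall>y. norm y = norm x \<and> y - x \<in> X \<longrightarrow> y \<in> E)"

lemma claimD: "claim E X \<Longrightarrow> x \<in> E \<Longrightarrow> norm y = norm x \<Longrightarrow> y - x \<in> X \<Longrightarrow> y \<in> E"
  unfolding claim_def by blast

lemma claim_mono: "claim E X \<Longrightarrow> Y \<subseteq> X \<Longrightarrow> claim E Y"
  unfolding claim_def by blast

lemma claim_image:
  fixes R :: "'a::euclidean_space \<Rightarrow> 'a"
  assumes cl: "claim E X" and lin: "linear R" and inv: "\<And>x. R (R x) = x"
    and nr: "\<And>x. norm (R x) = norm x" and good: "\<And>x. x \<in> E \<Longrightarrow> R x \<in> E"
  shows "claim E (R ` X)"
  unfolding claim_def
proof (intro ballI allI impI)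
  fix x y assume x: "x \<in> E" and yx: "norm y = norm x \<and> y - x \<in> R ` X"
  then obtain w where w: "w \<in> X" "y - x = R w" by blast
  have "R y - R x = w"
    using w(2) inv linear_diff[OF lin, of y x] by metis
  then have "R y \<in> E"
    using claimD[OF cl good[OF x], of "R y"] nr yx w(1) by simp
  then have "R (R y) \<in> E" by (rule good)
  then show "y \<in> E" by (simp add: inv)
qed

lemma swap_norm:
  fixes X :: "'a::euclidean_space set"
  assumes X: "subspace X" and a: "a \<in> X" and na: "norm a = norm (orth_proj X z)"
  shows "norm (z - orth_proj X z + a) = norm z"
proof -
  have o: "orthogonal (z - orth_proj X z) a"
    using proj_orth[OF X a, of z] by (simp add: orthogonal_def)
  have "(norm (z - orth_proj X z + a))\<^sup>2 = (norm (z - orth_proj X z))\<^sup>2 + (norm a)\<^sup>2"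
    by (rule norm_add_Pythagorean[OF o])
  also have "\<dots> = (norm z)\<^sup>2" using proj_pyth[OF X, of z] na by simp
  finally show ?thesis by (rule power2_eq_imp_eq) simp_all
qed

lemma align:
  fixes X V :: "'a::euclidean_space set"
  assumes cl: "claim E X" and X: "subspace X" and V: "subspace V" and XV: "X \<subseteq> V"
    and z: "z \<in> E" "z - x \<in> V"
    and mx: "\<And>z'. z' \<in> E \<Longrightarrow> z' - x \<in> V \<Longrightarrow> z' \<bullet> y \<le> z \<bullet> y"
    and py: "orth_proj X y \<noteq> 0"
  shows "orth_proj X z = (norm (orth_proj X z) / norm (orth_proj X y)) *\<^sub>R orth_proj X y"
proof -
  let ?P = "orth_proj X"
  define l where "l = norm (?P z) / norm (?P y)"
  define a where "a = l *\<^sub>R ?P y"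
  have aX: "a \<in> X" unfolding a_def by (intro subspace_scale[OF X] proj_in[OF X])
  have na: "norm a = norm (?P z)" using py by (simp add: a_def l_def)
  define z' where "z' = z - ?P z + a"
  have nz': "norm z' = norm z" unfolding z'_def by (rule swap_norm[OF X aX na])
  have d: "z' - z = a - ?P z" by (simp add: z'_def)
  have dX: "a - ?P z \<in> X" by (intro subspace_diff[OF X] aX proj_in[OF X])
  have "z' \<in> E" using claimD[OF cl z(1) nz'] d dX by simp
  moreover have "z' - x \<in> V"
  proof -
    have eq: "z' - x = (z - x) + (a - ?P z)" by (simp add: z'_def)
    have "a - ?P z \<in> V" using dX XV by blast
    then show ?thesis unfolding eq by (rule subspace_add[OF V z(2)])
  qed
  ultimately have le: "z' \<bullet> y \<le> z \<bullet> y" by (rule mx)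
  have e1: "?P z \<bullet> y = ?P z \<bullet> ?P y"
    using proj_inner[OF X proj_in[OF X], of y "z"] by (simp add: inner_commute)
  have e2: "a \<bullet> y = norm (?P z) * norm (?P y)"
  proof -
    have "a \<bullet> y = a \<bullet> ?P y" using proj_inner[OF X aX, of y] by (simp add: inner_commute)
    also have "\<dots> = l * (norm (?P y))\<^sup>2" by (simp add: a_def power2_norm_eq_inner)
    also have "\<dots> = norm (?P z) * norm (?P y)" using py by (simp add: l_def power2_eq_square)
    finally show ?thesis .
  qed
  have "z' \<bullet> y = z \<bullet> y - ?P z \<bullet> y + a \<bullet> y"
    by (simp add: z'_def inner_diff_left inner_add_left)
  with le e1 e2 have "norm (?P z) * norm (?P y) \<le> ?P z \<bullet> ?P y" by simp
  with norm_cauchy_schwarz[of "?P z" "?P y"] have "?P z \<bullet> ?P y = norm (?P z) * norm (?P y)"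
    by simp
  then have "norm (?P z) *\<^sub>R ?P y = norm (?P y) *\<^sub>R ?P z"
    by (simp add: norm_cauchy_schwarz_eq)
  then have "(1 / norm (?P y)) *\<^sub>R (norm (?P z) *\<^sub>R ?P y) = ?P z"
    using py by simp
  then show ?thesis by (simp add: l_def)
qed

lemma join:
  fixes E A B :: "'a::euclidean_space set"
  assumes Esph: "E \<subseteq> sphere 0 1" and Ecl: "closed E"
    and A: "subspace A" and B: "subspace B"
    and cA: "c \<in> A" and cB: "c \<in> B" and c0: "c \<noteq> 0"
    and clA: "claim E A" and clB: "claim E B"
  shows "claim E (span (A \<union> B))"
  unfolding claim_def
proof (intro ballI allI impI)
  let ?V = "span (A \<union> B)"
  have V: "subspace ?V" by (rule subspace_span)
  have AV: "A \<subseteq> ?V" and BV: "B \<subseteq> ?V" by (auto intro: span_base)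
  fix x y assume x: "x \<in> E" and yx: "norm y = norm x \<and> y - x \<in> ?V"
  have nx: "norm x = 1" using x Esph by auto
  have ny: "norm y = 1" using yx nx by simp
  have yxV: "y - x \<in> ?V" using yx by simp
  have orthV: "w \<bullet> v = 0" if "v \<in> ?V" "\<And>h. h \<in> A \<Longrightarrow> w \<bullet> h = 0" "\<And>h. h \<in> B \<Longrightarrow> w \<bullet> h = 0" for w v
  proof -
    have "orthogonal w v" using that(1)
    proof (rule orthogonal_to_span)
      fix h assume "h \<in> A \<union> B" then show "orthogonal w h" using that(2,3) by (auto simp: orthogonal_def)
    qed
    then show ?thesis by (simp add: orthogonal_def)
  qed
  have main: "y' \<in> E" if ny': "norm y' = 1" and y'V: "y' - x \<in> ?V" and y'c: "y' \<bullet> c \<noteq> 0" for y'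
  proof -
    define F where "F = E \<inter> (\<lambda>z. z - x) -` ?V"
    have "closed ((\<lambda>z. z - x) -` ?V)"
      by (intro closed_vimage closed_subspace V continuous_intros)
    then have "closed F" unfolding F_def using Ecl by blast
    moreover have "bounded F" unfolding F_def using Esph bounded_sphere bounded_subset by blast
    ultimately have "compact F" by (simp add: compact_eq_bounded_closed)
    moreover have "F \<noteq> {}" using x subspace_0[OF V] unfolding F_def by auto
    moreover have "continuous_on F (\<lambda>z. z \<bullet> y')" by (intro continuous_intros)
    ultimately obtain z where zF: "z \<in> F" and zmax: "\<And>z'. z' \<in> F \<Longrightarrow> z' \<bullet> y' \<le> z \<bullet> y'"
      using continuous_attains_sup[of F "\<lambda>z. z \<bullet> y'"] by blast
    have zE: "z \<in> E" and zV: "z - x \<in> ?V" using zF unfolding F_def by auto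
    have nz: "norm z = 1" using zE Esph by auto
    have mx: "\<And>z'. z' \<in> E \<Longrightarrow> z' - x \<in> ?V \<Longrightarrow> z' \<bullet> y' \<le> z \<bullet> y'"
      using zmax unfolding F_def by auto
    have pAy: "orth_proj A y' \<bullet> c = y' \<bullet> c" by (rule proj_inner[OF A cA])
    have pBy: "orth_proj B y' \<bullet> c = y' \<bullet> c" by (rule proj_inner[OF B cB])
    have pA0: "orth_proj A y' \<noteq> 0" using pAy y'c by auto
    have pB0: "orth_proj B y' \<noteq> 0" using pBy y'c by auto
    define la where "la = norm (orth_proj A z) / norm (orth_proj A y')"
    define lb where "lb = norm (orth_proj B z) / norm (orth_proj B y')"
    have eA: "orth_proj A z = la *\<^sub>R orth_proj A y'"
      unfolding la_def by (rule align[OF clA A V AV zE zV mx pA0])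
    have eB: "orth_proj B z = lb *\<^sub>R orth_proj B y'"
      unfolding lb_def by (rule align[OF clB B V BV zE zV mx pB0])
    have "z \<bullet> c = la * (y' \<bullet> c)"
      using proj_inner[OF A cA, of z] eA pAy by simp
    moreover have "z \<bullet> c = lb * (y' \<bullet> c)"
      using proj_inner[OF B cB, of z] eB pBy by simp
    ultimately have lab: "la = lb" using y'c by simp
    have la0: "la \<ge> 0" unfolding la_def by simp
    define u where "u = z - la *\<^sub>R y'"
    have uA: "u \<bullet> h = 0" if "h \<in> A" for h
    proof -
      have "u \<bullet> h = orth_proj A z \<bullet> h - la * (orth_proj A y' \<bullet> h)"
        using proj_inner[OF A that, of z] proj_inner[OF A that, of y']
        by (simp add: u_def inner_diff_left)
      then show ?thesis using eA by simp
    qed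
    have uB: "u \<bullet> h = 0" if "h \<in> B" for h
    proof -
      have "u \<bullet> h = orth_proj B z \<bullet> h - lb * (orth_proj B y' \<bullet> h)"
        using proj_inner[OF B that, of z] proj_inner[OF B that, of y'] lab
        by (simp add: u_def inner_diff_left)
      then show ?thesis using eB by simp
    qed
    have zy: "z - y' \<in> ?V"
    proof -
      have "z - y' = (z - x) - (y' - x)" by simp
      then show ?thesis using subspace_diff[OF V zV y'V] by simp
    qed
    have u0: "u \<bullet> (z - y') = 0" by (rule orthV[OF zy uA uB])
    have zz: "z \<bullet> z = 1" using nz by (simp add: dot_square_norm)
    have yy: "y' \<bullet> y' = 1" using ny' by (simp add: dot_square_norm)
    have com: "y' \<bullet> z = z \<bullet> y'" by (rule inner_commute)
    have e: "u \<bullet> (z - y') = z \<bullet> z - z \<bullet> y' - la * (y' \<bullet> z) + la * (y' \<bullet> y')"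
      by (simp add: u_def inner_diff_left inner_diff_right algebra_simps)
    have "(1 - z \<bullet> y') * (1 + la) = 0"
      using e u0 zz yy com by (simp add: algebra_simps)
    then have t1: "z \<bullet> y' = 1" using la0 by simp
    have "(z - y') \<bullet> (z - y') = z \<bullet> z - z \<bullet> y' - y' \<bullet> z + y' \<bullet> y'"
      by (simp add: inner_diff_left inner_diff_right)
    then have "(z - y') \<bullet> (z - y') = 0"
      using zz yy t1 com by simp
    then have "z = y'" by simp
    then show ?thesis using zE by simp
  qed
  have viaX: "y \<in> E" if clX: "claim E X" and X: "subspace X" and XV: "X \<subseteq> ?V" and cX: "c \<in> X"
      and pX: "orth_proj X y \<noteq> 0" for X
  proof -
    define a where "a = (norm (orth_proj X y) / norm c) *\<^sub>R c"
    have aX: "a \<in> X" unfolding a_def by (rule subspace_scale[OF X cX])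
    have na: "norm a = norm (orth_proj X y)" using c0 by (simp add: a_def)
    define y' where "y' = y - orth_proj X y + a"
    have ny': "norm y' = 1" unfolding y'_def using swap_norm[OF X aX na] ny by simp
    have dX: "a - orth_proj X y \<in> X" by (intro subspace_diff[OF X] aX proj_in[OF X])
    have "y' - x \<in> ?V"
    proof -
      have eq: "y' - x = (y - x) + (a - orth_proj X y)" by (simp add: y'_def)
      have "a - orth_proj X y \<in> ?V" using dX XV by blast
      then show ?thesis unfolding eq by (rule subspace_add[OF V yxV])
    qed
    moreover have "y' \<bullet> c \<noteq> 0"
    proof -
      have "(y - orth_proj X y) \<bullet> c = 0" by (rule proj_orth[OF X cX])
      moreover have "a \<bullet> c = norm (orth_proj X y) * norm c"
        using c0 by (simp add: a_def dot_square_norm power2_eq_square)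
      ultimately have "y' \<bullet> c = norm (orth_proj X y) * norm c"
        by (simp add: y'_def inner_add_left)
      then show ?thesis using pX c0 by simp
    qed
    ultimately have y'E: "y' \<in> E" using main ny' by blast
    have "y - y' = orth_proj X y - a" by (simp add: y'_def)
    moreover have "orth_proj X y - a \<in> X" by (intro subspace_diff[OF X] aX proj_in[OF X])
    ultimately show "y \<in> E" using claimD[OF clX y'E, of y] ny ny' by simp
  qed
  show "y \<in> E"
  proof (cases "y \<bullet> c = 0")
    case False then show ?thesis using main ny yxV by blast
  next
    case True
    show ?thesis
    proof (cases "orth_proj A y = 0")
      case False then show ?thesis using viaX[OF clA A AV cA] by blast
    next
      case pA: True
      show ?thesis
      proof (cases "orth_proj B y = 0")
        case False then show ?thesis using viaX[OF clB B BV cB] by blast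
      next
        case pB: True
        have "y \<bullet> h = 0" if "h \<in> A" for h using proj_inner[OF A that, of y] pA by simp
        moreover have "y \<bullet> h = 0" if "h \<in> B" for h using proj_inner[OF B that, of y] pB by simp
        ultimately have "y \<bullet> (y - x) = 0" using orthV[OF yxV] by blast
        moreover have "y \<bullet> y = 1" "x \<bullet> x = 1" using ny nx by (simp_all add: dot_square_norm)
        moreover have "x \<bullet> y = y \<bullet> x" by (rule inner_commute)
        moreover have "(y - x) \<bullet> (y - x) = y \<bullet> y - y \<bullet> x - x \<bullet> y + x \<bullet> x"
          by (simp add: inner_diff_left inner_diff_right)
        ultimately have "(y - x) \<bullet> (y - x) = 0"
          by (simp add: inner_diff_right)
        then have "y = x" by simp
        then show ?thesis using x by simp
      qed
    qed
  qed
qed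

definition rot :: "'a::euclidean_space \<Rightarrow> 'a \<Rightarrow> real \<Rightarrow> 'a \<Rightarrow> 'a" where
  "rot u v t x = x + ((cos t - 1) * (x \<bullet> u) - sin t * (x \<bullet> v)) *\<^sub>R u
                    + (sin t * (x \<bullet> u) + (cos t - 1) * (x \<bullet> v)) *\<^sub>R v"

lemma claim_rot:
  fixes u v :: "'a::euclidean_space"
  assumes uu: "u \<bullet> u = 1" and vv: "v \<bullet> v = 1" and uv: "u \<bullet> v = 0"
    and good: "\<And>t x. x \<in> E \<Longrightarrow> rot u v t x \<in> E"
  shows "claim E (span {u, v})"
  unfolding claim_def
proof (intro ballI allI impI)
  fix x y assume x: "x \<in> E" and yx: "norm y = norm x \<and> y - x \<in> span {u, v}"
  have vu: "v \<bullet> u = 0" using uv by (simp add: inner_commute)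
  define p where "p = x \<bullet> u"
  define q where "q = x \<bullet> v"
  define p' where "p' = y \<bullet> u"
  define q' where "q' = y \<bullet> v"
  define w where "w = y - x - (p' - p) *\<^sub>R u - (q' - q) *\<^sub>R v"
  have yxS: "y - x \<in> span {u, v}" using yx by simp
  have h1: "(p' - p) *\<^sub>R u \<in> span {u, v}" by (intro span_scale span_base) simp
  have h2: "(q' - q) *\<^sub>R v \<in> span {u, v}" by (intro span_scale span_base) simp
  have wS: "w \<in> span {u, v}"
    unfolding w_def by (rule span_diff[OF span_diff[OF yxS h1] h2])
  have wu: "w \<bullet> u = 0" unfolding w_def p_def p'_def
    by (simp add: inner_diff_left uu vu)
  have wv: "w \<bullet> v = 0" unfolding w_def q_def q'_def
    by (simp add: inner_diff_left vv uv)
  have "orthogonal w w" using wS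
  proof (rule orthogonal_to_span)
    fix h assume "h \<in> {u, v}" then show "orthogonal w h" using wu wv by (auto simp: orthogonal_def)
  qed
  then have "w = 0" by (simp add: orthogonal_def)
  then have ye: "y = x + (p' - p) *\<^sub>R u + (q' - q) *\<^sub>R v" unfolding w_def by (simp add: algebra_simps)
  have "y \<bullet> y = x \<bullet> x" using yx by (simp add: dot_square_norm)
  then have "(x + (p' - p) *\<^sub>R u + (q' - q) *\<^sub>R v) \<bullet> (x + (p' - p) *\<^sub>R u + (q' - q) *\<^sub>R v) = x \<bullet> x"
    using ye by simp
  then have "x \<bullet> x + 2 * (p' - p) * p + 2 * (q' - q) * q + (p' - p)^2 + (q' - q)^2 = x \<bullet> x"
    unfolding p_def q_def
    by (simp add: inner_add_left inner_add_right uu vv uv vu inner_commute power2_eq_square algebra_simps)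
  then have pq: "p'^2 + q'^2 = p^2 + q^2" by (simp add: power2_eq_square algebra_simps)
  show "y \<in> E"
  proof (cases "p^2 + q^2 = 0")
    case True
    then have "p = 0" "q = 0" by (simp_all add: sum_power2_eq_zero_iff)
    moreover have "p' = 0" "q' = 0" using pq True by (simp_all add: sum_power2_eq_zero_iff)
    ultimately show ?thesis using ye x by simp
  next
    case False
    define r2 where "r2 = p^2 + q^2"
    define c where "c = (p * p' + q * q') / r2"
    define s where "s = (p * q' - q * p') / r2"
    have r2: "r2 \<noteq> 0" using False by (simp add: r2_def)
    have "c^2 + s^2 = ((p * p' + q * q')^2 + (p * q' - q * p')^2) / r2^2"
      unfolding c_def s_def power_divide by (simp add: add_divide_distrib)
    also have "(p * p' + q * q')^2 + (p * q' - q * p')^2 = (p^2 + q^2) * (p'^2 + q'^2)"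
      by (simp add: power2_eq_square algebra_simps)
    also have "\<dots> = r2^2" using pq by (simp add: r2_def power2_eq_square)
    finally have "c^2 + s^2 = 1" using r2 by simp
    then obtain t where ct: "c = cos t" and st: "s = sin t" by (rule sincos_total_2pi)
    have "c * p - s * q = ((p * p' + q * q') * p - (p * q' - q * p') * q) / r2"
      using r2 unfolding c_def s_def by (simp add: field_simps)
    also have "(p * p' + q * q') * p - (p * q' - q * p') * q = p' * r2"
      by (simp add: r2_def power2_eq_square algebra_simps)
    finally have e1: "c * p - s * q = p'" using r2 by simp
    have "s * p + c * q = ((p * q' - q * p') * p + (p * p' + q * q') * q) / r2"
      using r2 unfolding c_def s_def by (simp add: field_simps)
    also have "(p * q' - q * p') * p + (p * p' + q * q') * q = q' * r2"
      by (simp add: r2_def power2_eq_square algebra_simps)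
    finally have e2: "s * p + c * q = q'" using r2 by simp
    have "rot u v t x = x + (c * p - s * q - p) *\<^sub>R u + (s * p + c * q - q) *\<^sub>R v"
      unfolding rot_def ct st p_def q_def by (simp add: algebra_simps)
    also have "\<dots> = y" using ye e1 e2 by simp
    finally show ?thesis using good[OF x] by metis
  qed
qed



definition tor :: "(nat \<Rightarrow> 'a::euclidean_space) \<Rightarrow> (nat \<Rightarrow> 'a) \<Rightarrow> nat set \<Rightarrow> (nat \<Rightarrow> real) \<Rightarrow> 'a \<Rightarrow> 'a" where
  "tor u v J g x = x + (\<Sum>j\<in>J. ((cos (g j) - 1) * (x \<bullet> u j) - sin (g j) * (x \<bullet> v j)) *\<^sub>R u j
                     + (sin (g j) * (x \<bullet> u j) + (cos (g j) - 1) * (x \<bullet> v j)) *\<^sub>R v j)"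

definition frame :: "(nat \<Rightarrow> 'a::euclidean_space) \<Rightarrow> (nat \<Rightarrow> 'a) \<Rightarrow> nat set \<Rightarrow> bool" where
  "frame u v J \<longleftrightarrow> (\<forall>i\<in>J. \<forall>j\<in>J. u i \<bullet> u j = (if i = j then 1 else 0)
       \<and> v i \<bullet> v j = (if i = j then 1 else 0) \<and> u i \<bullet> v j = 0)"

lemma frameD:
  assumes "frame u v J" "i \<in> J" "j \<in> J"
  shows "u i \<bullet> u j = (if i = j then 1 else 0)" "v i \<bullet> v j = (if i = j then 1 else 0)"
    "u i \<bullet> v j = 0" "v i \<bullet> u j = 0"
  using assms unfolding frame_def by (auto simp: inner_commute)

lemma tor_u:
  assumes J: "finite J" and fr: "frame u v J" and i: "i \<in> J"
  shows "tor u v J g x \<bullet> u i = cos (g i) * (x \<bullet> u i) - sin (g i) * (x \<bullet> v i)"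
proof -
  have "(\<Sum>j\<in>J. ((cos (g j) - 1) * (x \<bullet> u j) - sin (g j) * (x \<bullet> v j)) *\<^sub>R u j
                     + (sin (g j) * (x \<bullet> u j) + (cos (g j) - 1) * (x \<bullet> v j)) *\<^sub>R v j) \<bullet> u i
     = (\<Sum>j\<in>J. if j = i then ((cos (g j) - 1) * (x \<bullet> u j) - sin (g j) * (x \<bullet> v j)) else 0)"
    unfolding inner_sum_left
    by (intro sum.cong refl) (simp add: inner_add_left frameD[OF fr _ i])
  also have "\<dots> = (cos (g i) - 1) * (x \<bullet> u i) - sin (g i) * (x \<bullet> v i)"
    using J i by (simp add: sum.delta)
  finally show ?thesis unfolding tor_def inner_add_left by (simp add: algebra_simps)
qed

lemma tor_v:
  assumes J: "finite J" and fr: "frame u v J" and i: "i \<in> J"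
  shows "tor u v J g x \<bullet> v i = sin (g i) * (x \<bullet> u i) + cos (g i) * (x \<bullet> v i)"
proof -
  have "(\<Sum>j\<in>J. ((cos (g j) - 1) * (x \<bullet> u j) - sin (g j) * (x \<bullet> v j)) *\<^sub>R u j
                     + (sin (g j) * (x \<bullet> u j) + (cos (g j) - 1) * (x \<bullet> v j)) *\<^sub>R v j) \<bullet> v i
     = (\<Sum>j\<in>J. if j = i then (sin (g j) * (x \<bullet> u j) + (cos (g j) - 1) * (x \<bullet> v j)) else 0)"
    unfolding inner_sum_left
    by (intro sum.cong refl) (simp add: inner_add_left frameD[OF fr _ i])
  also have "\<dots> = sin (g i) * (x \<bullet> u i) + (cos (g i) - 1) * (x \<bullet> v i)"
    using J i by (simp add: sum.delta)
  finally show ?thesis unfolding tor_def inner_add_left by (simp add: algebra_simps)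
qed

lemma tor_term_add:
  fixes U W :: "'a::real_vector"
  shows "(((cos h - 1)*p - sin h*q) *\<^sub>R U + (sin h*p + (cos h - 1)*q) *\<^sub>R W)
    + (((cos g - 1)*(cos h*p - sin h*q) - sin g*(sin h*p + cos h*q)) *\<^sub>R U
       + (sin g*(cos h*p - sin h*q) + (cos g - 1)*(sin h*p + cos h*q)) *\<^sub>R W)
    = ((cos (g+h) - 1)*p - sin (g+h)*q) *\<^sub>R U + (sin (g+h)*p + (cos (g+h) - 1)*q) *\<^sub>R W"
proof -
  have a: "((cos h - 1)*p - sin h*q) + ((cos g - 1)*(cos h*p - sin h*q) - sin g*(sin h*p + cos h*q))
      = (cos (g+h) - 1)*p - sin (g+h)*q"
    by (simp add: cos_add sin_add algebra_simps)
  have b: "(sin h*p + (cos h - 1)*q) + (sin g*(cos h*p - sin h*q) + (cos g - 1)*(sin h*p + cos h*q))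
      = sin (g+h)*p + (cos (g+h) - 1)*q"
    by (simp add: cos_add sin_add algebra_simps)
  show ?thesis
    by (simp only: a[symmetric] b[symmetric] scaleR_add_left) (simp add: algebra_simps)
qed

lemma tor_add:
  assumes J: "finite J" and fr: "frame u v J"
  shows "tor u v J g (tor u v J h x) = tor u v J (\<lambda>j. g j + h j) x"
proof -
  let ?y = "tor u v J h x"
  have "tor u v J g ?y = ?y + (\<Sum>j\<in>J.
       ((cos (g j) - 1)*(cos (h j) * (x \<bullet> u j) - sin (h j) * (x \<bullet> v j))
         - sin (g j)*(sin (h j) * (x \<bullet> u j) + cos (h j) * (x \<bullet> v j))) *\<^sub>R u j
     + (sin (g j)*(cos (h j) * (x \<bullet> u j) - sin (h j) * (x \<bullet> v j))
         + (cos (g j) - 1)*(sin (h j) * (x \<bullet> u j) + cos (h j) * (x \<bullet> v j))) *\<^sub>R v j)"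
    unfolding tor_def[of u v J g]
    by (intro arg_cong2[where f="(+)"] refl sum.cong)
       (simp_all add: tor_u[OF J fr] tor_v[OF J fr])
  also have "\<dots> = x + (\<Sum>j\<in>J. (((cos (h j) - 1)*(x \<bullet> u j) - sin (h j)*(x \<bullet> v j)) *\<^sub>R u j
                     + (sin (h j)*(x \<bullet> u j) + (cos (h j) - 1)*(x \<bullet> v j)) *\<^sub>R v j)
     + (((cos (g j) - 1)*(cos (h j) * (x \<bullet> u j) - sin (h j) * (x \<bullet> v j))
         - sin (g j)*(sin (h j) * (x \<bullet> u j) + cos (h j) * (x \<bullet> v j))) *\<^sub>R u j
     + (sin (g j)*(cos (h j) * (x \<bullet> u j) - sin (h j) * (x \<bullet> v j))
         + (cos (g j) - 1)*(sin (h j) * (x \<bullet> u j) + cos (h j) * (x \<bullet> v j))) *\<^sub>R v j))"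
    unfolding tor_def[of u v J h] sum.distrib by (simp add: algebra_simps)
  also have "\<dots> = tor u v J (\<lambda>j. g j + h j) x"
    unfolding tor_def
    apply (rule arg_cong2[where f="(+)"], rule refl)
    apply (rule sum.cong, rule refl)
    by (rule tor_term_add)
  finally show ?thesis .
qed

lemma tor_zero: "tor u v J (\<lambda>_. 0) x = x"
  by (simp add: tor_def)

lemma tor_single:
  assumes J: "finite J" and j0: "j0 \<in> J" and g0: "\<And>j. j \<in> J \<Longrightarrow> j \<noteq> j0 \<Longrightarrow> g j = 0"
  shows "tor u v J g x = rot (u j0) (v j0) (g j0) x"
proof -
  have "(\<Sum>j\<in>J. ((cos (g j) - 1) * (x \<bullet> u j) - sin (g j) * (x \<bullet> v j)) *\<^sub>R u j
                     + (sin (g j) * (x \<bullet> u j) + (cos (g j) - 1) * (x \<bullet> v j)) *\<^sub>R v j)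
    = (\<Sum>j\<in>J. if j = j0 then ((cos (g j) - 1) * (x \<bullet> u j) - sin (g j) * (x \<bullet> v j)) *\<^sub>R u j
                     + (sin (g j) * (x \<bullet> u j) + (cos (g j) - 1) * (x \<bullet> v j)) *\<^sub>R v j else 0)"
    by (intro sum.cong refl) (simp add: g0)
  also have "\<dots> = ((cos (g j0) - 1) * (x \<bullet> u j0) - sin (g j0) * (x \<bullet> v j0)) *\<^sub>R u j0
                     + (sin (g j0) * (x \<bullet> u j0) + (cos (g j0) - 1) * (x \<bullet> v j0)) *\<^sub>R v j0"
    using J j0 by (simp add: sum.delta)
  finally show ?thesis unfolding tor_def rot_def by (simp add: algebra_simps)
qed

lemma tor_tendsto:
  assumes c: "\<And>j. j \<in> J \<Longrightarrow> (\<lambda>n. cos (G n j)) \<longlonglongrightarrow> cos (g j)"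
    and s: "\<And>j. j \<in> J \<Longrightarrow> (\<lambda>n. sin (G n j)) \<longlonglongrightarrow> sin (g j)"
  shows "(\<lambda>n. tor u v J (G n) x) \<longlonglongrightarrow> tor u v J g x"
  unfolding tor_def
  by (intro tendsto_intros c s)

lemma pair_term:
  fixes U W :: "'a::real_vector"
  shows "2 *\<^sub>R ((2 * ((cos a * p + sin a * q) * cos a) - p) *\<^sub>R U)
       - 2 *\<^sub>R ((cos a * p + sin a * q) *\<^sub>R (cos a *\<^sub>R U + sin a *\<^sub>R W))
     = ((cos (-2 * a) - 1) * p - sin (-2 * a) * q) *\<^sub>R U
       + (sin (-2 * a) * p + (cos (-2 * a) - 1) * q) *\<^sub>R W"
proof -
  have ss: "sin a * sin a = 1 - cos a * cos a" using sin_squared_eq[of a] by (simp add: power2_eq_square)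
  have c2: "cos (-2 * a) = 2 * (cos a * cos a) - 1"
  proof -
    have "cos (-2 * a) = cos (2 * a)" by (metis cos_minus mult_minus_left)
    then show ?thesis by (simp add: cos_double_cos power2_eq_square)
  qed
  have s2: "sin (-2 * a) = - (2 * sin a * cos a)"
  proof -
    have "sin (-2 * a) = - sin (2 * a)" by (metis sin_minus mult_minus_left)
    then show ?thesis by (simp add: sin_double)
  qed
  have a: "2 * (2 * ((cos a * p + sin a * q) * cos a) - p) - 2 * ((cos a * p + sin a * q) * cos a)
     = (cos (-2 * a) - 1) * p - sin (-2 * a) * q"
    unfolding c2 s2 by (simp add: algebra_simps)
  have b: "- (2 * ((cos a * p + sin a * q) * sin a)) = sin (-2 * a) * p + (cos (-2 * a) - 1) * q"
    unfolding c2 s2 by (simp add: algebra_simps ss)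
  have lin2: "\<And>x y z. x *\<^sub>R U - (y *\<^sub>R U + z *\<^sub>R W) = (x - y) *\<^sub>R U + (- z) *\<^sub>R W"
    by (simp add: algebra_simps)
  show ?thesis
    by (simp only: scaleR_scaleR scaleR_add_right lin2 a b)
qed

lemma refl_pair:
  fixes u v :: "nat \<Rightarrow> 'a::euclidean_space"
  assumes J: "finite J" and fr: "frame u v J"
  shows "refl_sub (span (u ` J)) (refl_sub (span ((\<lambda>j. cos (a j) *\<^sub>R u j + sin (a j) *\<^sub>R v j) ` J)) x)
       = tor u v J (\<lambda>j. -2 * a j) x"
proof -
  define w where "w = (\<lambda>j. cos (a j) *\<^sub>R u j + sin (a j) *\<^sub>R v j)"
  have uu: "u i \<bullet> u j = (if i = j then 1 else 0)" if "i \<in> J" "j \<in> J" for i j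
    using frameD[OF fr that] by simp
  have wu: "w j \<bullet> u i = (if j = i then cos (a j) else 0)" if "i \<in> J" "j \<in> J" for i j
    using frameD[OF fr that(2) that(1)] by (simp add: w_def inner_add_left)
  have ww: "w i \<bullet> w j = (if i = j then 1 else 0)" if "i \<in> J" "j \<in> J" for i j
    using frameD[OF fr that] frameD[OF fr that(2) that(1)]
    by (auto simp: w_def inner_add_left inner_add_right power2_eq_square[symmetric])
  have Pu: "orth_proj (span (u ` J)) z = (\<Sum>j\<in>J. (z \<bullet> u j) *\<^sub>R u j)" for z
    by (rule proj_orthonormal[OF J uu])
  have Pw: "orth_proj (span (w ` J)) z = (\<Sum>j\<in>J. (z \<bullet> w j) *\<^sub>R w j)" for z
    by (rule proj_orthonormal[OF J ww])
  define y where "y = refl_sub (span (w ` J)) x"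
  have y: "y = 2 *\<^sub>R (\<Sum>j\<in>J. (x \<bullet> w j) *\<^sub>R w j) - x"
    by (simp add: y_def refl_sub_def Pw)
  have yu: "y \<bullet> u i = 2 * ((x \<bullet> w i) * cos (a i)) - x \<bullet> u i" if i: "i \<in> J" for i
  proof -
    have "(\<Sum>j\<in>J. (x \<bullet> w j) *\<^sub>R w j) \<bullet> u i = (\<Sum>j\<in>J. if j = i then (x \<bullet> w j) * cos (a j) else 0)"
      unfolding inner_sum_left by (intro sum.cong refl) (simp add: wu[OF i])
    also have "\<dots> = (x \<bullet> w i) * cos (a i)" using J i by (simp add: sum.delta)
    finally show ?thesis by (simp add: y inner_diff_left)
  qed
  have "refl_sub (span (u ` J)) y = 2 *\<^sub>R (\<Sum>j\<in>J. (y \<bullet> u j) *\<^sub>R u j) - y"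
    by (simp add: refl_sub_def Pu)
  also have "(\<Sum>j\<in>J. (y \<bullet> u j) *\<^sub>R u j) = (\<Sum>j\<in>J. (2 * ((x \<bullet> w j) * cos (a j)) - x \<bullet> u j) *\<^sub>R u j)"
    by (rule sum.cong) (simp_all add: yu)
  also have "2 *\<^sub>R (\<Sum>j\<in>J. (2 * ((x \<bullet> w j) * cos (a j)) - x \<bullet> u j) *\<^sub>R u j) - y
      = x + ((\<Sum>j\<in>J. 2 *\<^sub>R ((2 * ((x \<bullet> w j) * cos (a j)) - x \<bullet> u j) *\<^sub>R u j))
                   - (\<Sum>j\<in>J. 2 *\<^sub>R ((x \<bullet> w j) *\<^sub>R w j)))"
    unfolding y scaleR_sum_right by simp
  also have "\<dots> = x + (\<Sum>j\<in>J. 2 *\<^sub>R ((2 * ((x \<bullet> w j) * cos (a j)) - x \<bullet> u j) *\<^sub>R u j)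
                   - 2 *\<^sub>R ((x \<bullet> w j) *\<^sub>R w j))"
    by (simp add: sum_subtractf)
  also have "\<dots> = tor u v J (\<lambda>j. -2 * a j) x"
    unfolding tor_def
  proof (rule arg_cong2[where f="(+)"], rule refl, rule sum.cong, rule refl)
    fix j assume "j \<in> J"
    have xw: "x \<bullet> w j = cos (a j) * (x \<bullet> u j) + sin (a j) * (x \<bullet> v j)"
      by (simp add: w_def inner_add_right)
    show "2 *\<^sub>R ((2 * ((x \<bullet> w j) * cos (a j)) - x \<bullet> u j) *\<^sub>R u j) - 2 *\<^sub>R ((x \<bullet> w j) *\<^sub>R w j) =
        ((cos (-2 * a j) - 1) * (x \<bullet> u j) - sin (-2 * a j) * (x \<bullet> v j)) *\<^sub>R u j +
        (sin (-2 * a j) * (x \<bullet> u j) + (cos (-2 * a j) - 1) * (x \<bullet> v j)) *\<^sub>R v j"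
      unfolding xw unfolding w_def by (rule pair_term)
  qed
  finally show ?thesis by (simp add: y_def w_def)
qed



lemma cos_shift_int: "cos (x + 2 * pi * of_int m) = cos x"
  by (simp add: cos_add)

lemma sin_shift_int: "sin (x + 2 * pi * of_int m) = sin x"
  by (simp add: sin_add)

lemma close_tendsto:
  fixes th :: "nat \<Rightarrow> real"
  assumes "\<And>n. \<bar>th n - c\<bar> < inverse (real (Suc n))"
  shows "th \<longlonglongrightarrow> c"
proof (rule tendsto_sandwich[of "\<lambda>n. c - inverse (real (Suc n))" th sequentially "\<lambda>n. c + inverse (real (Suc n))"])
  show "\<forall>\<^sub>F n in sequentially. c - inverse (real (Suc n)) \<le> th n"
    using assms by (intro always_eventually allI) (smt (verit) abs_less_iff)
  show "\<forall>\<^sub>F n in sequentially. th n \<le> c + inverse (real (Suc n))"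
    using assms by (intro always_eventually allI) (smt (verit) abs_less_iff)
  show "(\<lambda>n. c - inverse (real (Suc n))) \<longlonglongrightarrow> c"
    using tendsto_diff[OF tendsto_const LIMSEQ_inverse_real_of_nat, of c] by simp
  show "(\<lambda>n. c + inverse (real (Suc n))) \<longlonglongrightarrow> c"
    using tendsto_add[OF tendsto_const LIMSEQ_inverse_real_of_nat, of c] by simp
qed

lemma torus_dense:
  fixes u v :: "nat \<Rightarrow> 'a::euclidean_space"
  assumes Ecl: "closed E"
    and goodk: "\<And>k::int. \<And>x. x \<in> E \<Longrightarrow> tor u v J (\<lambda>j. of_int k * g0 j) x \<in> E"
    and kron: "\<And>e. e > 0 \<Longrightarrow> \<exists>k::int. \<exists>m::nat \<Rightarrow> int. \<forall>j\<in>J. \<bar>of_int k * g0 j + 2 * pi * of_int (m j) - phi j\<bar> < e"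
    and x: "x \<in> E"
  shows "tor u v J phi x \<in> E"
proof -
  have "\<forall>n. \<exists>k::int. \<exists>m::nat \<Rightarrow> int. \<forall>j\<in>J. \<bar>of_int k * g0 j + 2 * pi * of_int (m j) - phi j\<bar> < inverse (real (Suc n))"
    using kron by simp
  then obtain K :: "nat \<Rightarrow> int" and M :: "nat \<Rightarrow> nat \<Rightarrow> int"
    where KM: "\<And>n j. j \<in> J \<Longrightarrow> \<bar>of_int (K n) * g0 j + 2 * pi * of_int (M n j) - phi j\<bar> < inverse (real (Suc n))"
    by metis
  define G where "G = (\<lambda>n j. of_int (K n) * g0 j)"
  have lim: "(\<lambda>n. of_int (K n) * g0 j + 2 * pi * of_int (M n j)) \<longlonglongrightarrow> phi j" if "j \<in> J" for j
    by (rule close_tendsto) (use KM[OF that] in auto)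
  have c: "(\<lambda>n. cos (G n j)) \<longlonglongrightarrow> cos (phi j)" if "j \<in> J" for j
    using tendsto_cos[OF lim[OF that]] by (simp add: G_def cos_shift_int)
  have s: "(\<lambda>n. sin (G n j)) \<longlonglongrightarrow> sin (phi j)" if "j \<in> J" for j
    using tendsto_sin[OF lim[OF that]] by (simp add: G_def sin_shift_int)
  have L: "(\<lambda>n. tor u v J (G n) x) \<longlonglongrightarrow> tor u v J phi x"
    by (rule tor_tendsto[OF c s])
  have I: "tor u v J (G n) x \<in> E" for n
    unfolding G_def by (rule goodk[OF x])
  show ?thesis by (rule closed_sequentially[OF Ecl I L])
qed

lemma kron:
  fixes \<alpha> :: "nat \<Rightarrow> real"
  assumes indep: "pi_alphas_Q_indep d \<alpha>"
    and mono: "\<And>i j. i \<in> {1..d} \<Longrightarrow> j \<in> {1..d} \<Longrightarrow> i < j \<Longrightarrow> \<alpha> i < \<alpha> j"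
    and bnd: "\<And>j. j \<in> {1..d} \<Longrightarrow> 0 < \<alpha> j \<and> \<alpha> j < pi / 2"
    and e: "e > 0"
  shows "\<exists>k::int. \<exists>m::nat \<Rightarrow> int. \<forall>j\<in>{1..d}. \<bar>of_int k * (2 * \<alpha> j) + 2 * pi * of_int (m j) - phi j\<bar> < e"
proof -
  interpret M: Modules.module "(\<lambda>r. (*) (real_of_int r))"
    by (simp add: Modules.module.intro distrib_left mult.commute)
  define th where "th = (\<lambda>i. if i < d then \<alpha> (Suc i) / pi else 1)"
  have thd: "th d = 1" by (simp add: th_def)
  have thlt: "th i < 1" if "i < d" for i
  proof -
    have "\<alpha> (Suc i) < pi / 2" using bnd[of "Suc i"] that by auto
    then have "\<alpha> (Suc i) < pi" using pi_gt_zero by linarith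
    then have "\<alpha> (Suc i) / pi < 1" using pi_gt_zero by (simp add: divide_less_eq)
    then show ?thesis using that by (simp add: th_def)
  qed
  have inj: "inj_on th {..d}"
  proof (rule linorder_inj_onI')
    fix i j assume ij: "i \<in> {..d}" "j \<in> {..d}" "i < j"
    show "th i \<noteq> th j"
    proof (cases "j < d")
      case True
      then have "\<alpha> (Suc i) < \<alpha> (Suc j)" using mono[of "Suc i" "Suc j"] ij by auto
      then show ?thesis using True ij by (simp add: th_def divide_strict_right_mono)
    next
      case False
      then have "j = d" using ij by auto
      then show ?thesis using thlt[of i] ij thd by auto
    qed
  qed
  have ind: "M.independent (th ` {..d})"
    unfolding M.independent_explicit_module
  proof (intro allI impI)
    fix t and u :: "real \<Rightarrow> int" and v
    assume t: "finite t" "t \<subseteq> th ` {..d}" and s0: "(\<Sum>v\<in>t. real_of_int (u v) * v) = 0" and v: "v \<in> t"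
    define g where "g = (\<lambda>i. if th i \<in> t then u (th i) else 0)"
    have "(\<Sum>v\<in>t. real_of_int (u v) * v) = (\<Sum>v\<in>th ` {..d}. if v \<in> t then real_of_int (u v) * v else 0)"
    proof -
      have "th ` {..d} \<inter> t = t" using t by blast
      then show ?thesis using sum.inter_restrict[of "th ` {..d}" "\<lambda>v. real_of_int (u v) * v" t] by simp
    qed
    also have "\<dots> = (\<Sum>i\<in>{..d}. if th i \<in> t then real_of_int (u (th i)) * th i else 0)"
      by (simp add: sum.reindex[OF inj])
    also have "\<dots> = (\<Sum>i\<in>{..d}. real_of_int (g i) * th i)"
      by (rule sum.cong) (auto simp: g_def)
    finally have s1: "(\<Sum>i\<in>{..d}. real_of_int (g i) * th i) = 0" using s0 by simp
    have "(\<Sum>i\<in>{..d}. real_of_int (g i) * th i) = (\<Sum>i<d. real_of_int (g i) * th i) + real_of_int (g d)"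
      by (simp add: lessThan_Suc_atMost[symmetric] thd)
    also have "(\<Sum>i<d. real_of_int (g i) * th i) = (\<Sum>i<d. real_of_int (g i) * \<alpha> (Suc i)) / pi"
      by (simp add: th_def sum_divide_distrib)
    finally have "(\<Sum>i<d. real_of_int (g i) * \<alpha> (Suc i)) / pi + real_of_int (g d) = 0" using s1 by simp
    then have s2: "real_of_int (g d) * pi + (\<Sum>i<d. real_of_int (g i) * \<alpha> (Suc i)) = 0"
      by (simp add: field_simps)
    define q :: "nat \<Rightarrow> rat" where "q = (\<lambda>j. of_int (if j = 0 then g d else g (j - 1)))"
    have "of_rat (q 0) * pi + (\<Sum>j=1..d. of_rat (q j) * \<alpha> j) = 0"
    proof -
      have "(\<Sum>j=1..d. of_rat (q j) * \<alpha> j) = (\<Sum>i<d. real_of_int (g i) * \<alpha> (Suc i))"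
        using sum.atLeast1_atMost_eq[of "\<lambda>j. of_rat (q j) * \<alpha> j" d] by (simp add: q_def)
      then show ?thesis using s2 by (simp add: q_def)
    qed
    then have q0: "\<And>j. j \<in> {0..d} \<Longrightarrow> q j = 0" using indep unfolding pi_alphas_Q_indep_def by blast
    have g0: "g i = 0" if "i \<le> d" for i
    proof (cases "i = d")
      case True then show ?thesis using q0[of 0] by (simp add: q_def)
    next
      case False then show ?thesis using q0[of "Suc i"] that by (simp add: q_def)
    qed
    obtain i where i: "i \<le> d" "v = th i" using t(2) v by auto
    show "u v = 0" using g0[OF i(1)] i v by (simp add: g_def)
  qed
  define beta where "beta = (\<lambda>i. - phi (Suc i) / (2 * pi))"
  obtain k m where km: "\<And>i. i < d \<Longrightarrow> \<bar>of_int k * th i - of_int (m i) - beta i\<bar> < e / (2 * pi)"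
    using Kronecker_thm_2[OF ind inj thd, of "e / (2 * pi)" beta] e by auto
  have "\<forall>j\<in>{1..d}. \<bar>of_int (- k) * (2 * \<alpha> j) + 2 * pi * of_int (m (j - 1)) - phi j\<bar> < e"
  proof
    fix j assume j: "j \<in> {1..d}"
    then have jd: "j - 1 < d" and sj: "Suc (j - 1) = j" by auto
    have b: "\<bar>of_int k * (\<alpha> j / pi) - of_int (m (j - 1)) + phi j / (2 * pi)\<bar> < e / (2 * pi)"
    proof -
      have "th (j - 1) = \<alpha> j / pi" using jd sj unfolding th_def by simp
      then show ?thesis using km[OF jd] sj by (simp add: beta_def)
    qed
    have "of_int (- k) * (2 * \<alpha> j) + 2 * pi * of_int (m (j - 1)) - phi j
        = - (2 * pi) * (of_int k * (\<alpha> j / pi) - of_int (m (j - 1)) + phi j / (2 * pi))"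
      by (simp add: field_simps)
    then have "\<bar>of_int (- k) * (2 * \<alpha> j) + 2 * pi * of_int (m (j - 1)) - phi j\<bar>
        = (2 * pi) * \<bar>of_int k * (\<alpha> j / pi) - of_int (m (j - 1)) + phi j / (2 * pi)\<bar>"
      by (simp add: abs_mult)
    also have "\<dots> < (2 * pi) * (e / (2 * pi))"
      using b by (intro mult_strict_left_mono) auto
    also have "\<dots> = e" by simp
    finally show "\<bar>of_int (- k) * (2 * \<alpha> j) + 2 * pi * of_int (m (j - 1)) - phi j\<bar> < e" .
  qed
  then show ?thesis by (intro exI[of _ "- k"] exI[of _ "\<lambda>j. m (j - 1)"])
qed



lemma tor_nat_good:
  fixes u v :: "nat \<Rightarrow> 'a::euclidean_space"
  assumes J: "finite J" and fr: "frame u v J" and g: "\<And>x. x \<in> E \<Longrightarrow> tor u v J h x \<in> E"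
  shows "x \<in> E \<Longrightarrow> tor u v J (\<lambda>j. real n * h j) x \<in> E"
proof (induction n arbitrary: x)
  case 0 then show ?case using tor_zero[of u v J x] by simp
next
  case (Suc n)
  have "tor u v J (\<lambda>j. real (Suc n) * h j) x = tor u v J h (tor u v J (\<lambda>j. real n * h j) x)"
  proof -
    have "(\<lambda>j. h j + real n * h j) = (\<lambda>j. real (Suc n) * h j)" by (simp add: algebra_simps)
    then show ?thesis using tor_add[OF J fr, of h "\<lambda>j. real n * h j" x] by simp
  qed
  then show ?case using g Suc by simp
qed

lemma frame_claims:
  fixes u v :: "nat \<Rightarrow> 'a::euclidean_space"
  assumes Ecl: "closed E" and J: "finite J" and fr: "frame u v J"
    and g1: "\<And>x. x \<in> E \<Longrightarrow> refl_sub (span (u ` J)) (refl_sub (span ((\<lambda>j. cos (a j) *\<^sub>R u j + sin (a j) *\<^sub>R v j) ` J)) x) \<in> E"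
    and g2: "\<And>x. x \<in> E \<Longrightarrow> refl_sub (span ((\<lambda>j. cos (a j) *\<^sub>R u j + sin (a j) *\<^sub>R v j) ` J)) (refl_sub (span (u ` J)) x) \<in> E"
    and kr: "\<And>phi e. e > 0 \<Longrightarrow> \<exists>k::int. \<exists>m::nat \<Rightarrow> int. \<forall>j\<in>J. \<bar>of_int k * (2 * a j) + 2 * pi * of_int (m j) - phi j\<bar> < e"
    and j0: "j0 \<in> J"
  shows "claim E (span {u j0, v j0})"
proof -
  define U where "U = span (u ` J)"
  define W where "W = span ((\<lambda>j. cos (a j) *\<^sub>R u j + sin (a j) *\<^sub>R v j) ` J)"
  have T: "refl_sub U (refl_sub W x) = tor u v J (\<lambda>j. -2 * a j) x" for x
    unfolding U_def W_def by (rule refl_pair[OF J fr])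
  have T': "refl_sub W (refl_sub U x) = tor u v J (\<lambda>j. 2 * a j) x" for x
  proof -
    have z: "(\<lambda>j. 2 * a j + -2 * a j) = (\<lambda>_. 0)" by auto
    have "tor u v J (\<lambda>j. -2 * a j) (refl_sub W (refl_sub U x)) = x"
      unfolding T[symmetric] U_def W_def by (simp add: refl_invol subspace_span)
    then have "tor u v J (\<lambda>j. 2 * a j) (tor u v J (\<lambda>j. -2 * a j) (refl_sub W (refl_sub U x)))
       = tor u v J (\<lambda>j. 2 * a j) x" by simp
    then show ?thesis using tor_add[OF J fr, of "\<lambda>j. 2 * a j" "\<lambda>j. -2 * a j"] z by (simp add: tor_zero)
  qed
  have gp: "tor u v J (\<lambda>j. 2 * a j) x \<in> E" if "x \<in> E" for x
    using g2[OF that] T' unfolding U_def W_def by simp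
  have gm: "tor u v J (\<lambda>j. - (2 * a j)) x \<in> E" if "x \<in> E" for x
    using g1[OF that] T unfolding U_def W_def by simp
  have goodk: "tor u v J (\<lambda>j. of_int k * (2 * a j)) x \<in> E" if "x \<in> E" for k :: int and x
  proof (cases "k \<ge> 0")
    case True
    have eq: "(\<lambda>j. of_int k * (2 * a j)) = (\<lambda>j. real (nat k) * (2 * a j))"
      using True by simp
    show ?thesis unfolding eq by (rule tor_nat_good[OF J fr gp that])
  next
    case False
    then have k: "real_of_int k = - real (nat (- k))" by simp
    have eq: "(\<lambda>j. of_int k * (2 * a j)) = (\<lambda>j. real (nat (- k)) * - (2 * a j))"
      unfolding k by simp
    show ?thesis unfolding eq by (rule tor_nat_good[OF J fr gm that])
  qed
  have rg: "rot (u j0) (v j0) t x \<in> E" if "x \<in> E" for t x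
  proof -
    define phi where "phi = (\<lambda>j. if j = j0 then t else 0)"
    have "tor u v J phi x \<in> E"
      by (rule torus_dense[OF Ecl goodk kr that]) simp
    moreover have "tor u v J phi x = rot (u j0) (v j0) (phi j0) x"
      by (rule tor_single[OF J j0]) (simp add: phi_def)
    ultimately show ?thesis by (simp add: phi_def)
  qed
  show ?thesis
  proof (rule claim_rot)
    show "u j0 \<bullet> u j0 = 1" using frameD(1)[OF fr j0 j0] by simp
    show "v j0 \<bullet> v j0 = 1" using frameD(2)[OF fr j0 j0] by simp
    show "u j0 \<bullet> v j0 = 0" using frameD(3)[OF fr j0 j0] by simp
    show "\<And>t x. x \<in> E \<Longrightarrow> rot (u j0) (v j0) t x \<in> E" by (rule rg)
  qed
qed

lemma frame_e:
  fixes e :: "nat \<Rightarrow> 'a::euclidean_space"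
  assumes on: "\<forall>a\<in>{1..n}. \<forall>b\<in>{1..n}. e a \<bullet> e b = (if a = b then 1 else 0)"
    and f: "f ` J \<subseteq> {1..n}" and g: "g ` J \<subseteq> {1..n}" and fi: "inj_on f J" and gi: "inj_on g J"
    and fg: "\<And>i j. i \<in> J \<Longrightarrow> j \<in> J \<Longrightarrow> f i \<noteq> g j"
  shows "frame (\<lambda>j. e (f j)) (\<lambda>j. e (g j)) J"
  unfolding frame_def
proof (intro ballI conjI)
  fix i j assume i: "i \<in> J" and j: "j \<in> J"
  have fi': "f i \<in> {1..n}" "f j \<in> {1..n}" "g i \<in> {1..n}" "g j \<in> {1..n}" using f g i j by auto
  show "e (f i) \<bullet> e (f j) = (if i = j then 1 else 0)"
    using on fi' inj_onD[OF fi _ i j] by auto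
  show "e (g i) \<bullet> e (g j) = (if i = j then 1 else 0)"
    using on fi' inj_onD[OF gi _ i j] by auto
  show "e (f i) \<bullet> e (g j) = 0"
    using on fi' fg[OF i j] by auto
qed



lemma dim_orth_comp:
  fixes M :: "'a::euclidean_space set"
  assumes M: "subspace M"
  shows "dim (orthogonal_comp M) + dim M = DIM('a)"
proof -
  have "dim {y \<in> UNIV. \<forall>x\<in>M. orthogonal x y} + dim M = dim (UNIV :: 'a set)"
    by (rule dim_subspace_orthogonal_to_vectors[OF M subspace_UNIV subset_UNIV])
  moreover have "{y \<in> UNIV. \<forall>x\<in>M. orthogonal x y} = orthogonal_comp M"
    by (auto simp: orthogonal_comp_def)
  ultimately show ?thesis by simp
qed

lemma nonzero_inter:
  fixes A M :: "'a::euclidean_space set"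
  assumes A: "subspace A" and M: "subspace M" and lt: "dim M < dim A"
  obtains c where "c \<in> A" "c \<in> orthogonal_comp M" "c \<noteq> 0"
proof -
  have s: "dim {x + y |x y. x \<in> A \<and> y \<in> orthogonal_comp M} + dim (A \<inter> orthogonal_comp M)
      = dim A + dim (orthogonal_comp M)"
    by (rule dim_sums_Int[OF A subspace_orthogonal_comp])
  have "dim {x + y |x y. x \<in> A \<and> y \<in> orthogonal_comp M} \<le> DIM('a)"
    by (rule dim_subset_UNIV)
  moreover have "dim (orthogonal_comp M) + dim M = DIM('a)" by (rule dim_orth_comp[OF M])
  ultimately have "dim (A \<inter> orthogonal_comp M) \<noteq> 0" using s lt by linarith
  then have "\<not> (A \<inter> orthogonal_comp M \<subseteq> {0})" by simp
  then show ?thesis using that by blast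
qed

lemma proj_surj:
  fixes A M :: "'a::euclidean_space set"
  assumes A: "subspace A" and M: "subspace M" and tr: "M \<inter> orthogonal_comp A = {0}" and m: "m \<in> M"
  shows "\<exists>a\<in>A. orth_proj M a = m"
proof (rule ccontr)
  assume nm: "\<not> (\<exists>a\<in>A. orth_proj M a = m)"
  let ?P = "orth_proj M ` A"
  have sP: "subspace ?P" by (rule linear_subspace_image[OF proj_linear[OF M] A])
  have "?P \<subseteq> M" using proj_in[OF M] by blast
  moreover have "m \<notin> ?P" using nm by blast
  ultimately have PM: "?P \<subset> M" using m by blast
  have sp1: "span ?P = ?P" using sP by (simp add: span_eq_iff)
  have sp2: "span M = M" using M by (simp add: span_eq_iff)
  have ss: "span ?P \<subset> span M" unfolding sp1 sp2 by (rule PM)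
  obtain x where x0: "x \<noteq> 0" and xM: "x \<in> span M" and xo: "\<And>y. y \<in> span ?P \<Longrightarrow> orthogonal x y"
    using orthogonal_to_subspace_exists_gen[OF ss] by blast
  have xM': "x \<in> M" using xM sp2 by simp
  have "x \<in> orthogonal_comp A"
    unfolding orthogonal_comp_def
  proof (intro CollectI ballI)
    fix a assume a: "a \<in> A"
    have "orthogonal x (orth_proj M a)" using xo a by (auto intro: span_base)
    moreover have "orth_proj M a \<bullet> x = a \<bullet> x" by (rule proj_inner[OF M xM'])
    ultimately show "orthogonal a x" by (simp add: orthogonal_def inner_commute)
  qed
  then have "x \<in> M \<inter> orthogonal_comp A" using xM' by blast
  then show False using tr x0 by blast
qed

lemma ext_step:
  fixes A H M E :: "'a::euclidean_space set"
  assumes Esph: "E \<subseteq> sphere 0 1" and Ecl: "closed E"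
    and A: "subspace A" and H: "subspace H" and HM: "M = H \<or> M = orthogonal_comp H"
    and clA: "claim E A" and good: "\<And>x. x \<in> E \<Longrightarrow> refl_sub H x \<in> E"
    and lt: "dim M < dim A" and tr: "M \<inter> orthogonal_comp A = {0}"
  shows "claim E (span (A \<union> M))"
proof -
  have M: "subspace M" using HM H subspace_orthogonal_comp by auto
  obtain \<sigma> :: real where sg: "\<sigma> * \<sigma> = 1" and rs: "\<And>x. refl_sub H x = \<sigma> *\<^sub>R refl_sub M x"
  proof (cases "M = H")
    case True then show ?thesis using that[of 1] by simp
  next
    case False
    then have "M = orthogonal_comp H" using HM by blast
    then have "refl_sub H x = (-1) *\<^sub>R refl_sub M x" for x using refl_comp[OF H, of x] by simp
    then show ?thesis using that[of "-1"] by simp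
  qed
  let ?R = "refl_sub H"
  let ?B = "?R ` A"
  have linR: "linear ?R" by (rule refl_linear[OF H])
  have clB: "claim E ?B"
    by (rule claim_image[OF clA linR refl_invol[OF H] refl_norm[OF H] good])
  have B: "subspace ?B" by (rule linear_subspace_image[OF linR A])
  obtain c where cA: "c \<in> A" and cM: "c \<in> orthogonal_comp M" and c0: "c \<noteq> 0"
    using nonzero_inter[OF A M lt] by blast
  have "refl_sub M c = - c"
    by (rule refl_orth_zero[OF M]) (use cM in \<open>auto simp: orthogonal_comp_def orthogonal_def inner_commute\<close>)
  then have Rc: "?R c = (- \<sigma>) *\<^sub>R c" using rs by simp
  have "?R c \<in> A" unfolding Rc by (rule subspace_scale[OF A cA])
  moreover have "c = ?R (?R c)" by (simp add: refl_invol[OF H])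
  ultimately have cB: "c \<in> ?B" by blast
  have cl: "claim E (span (A \<union> ?B))"
    by (rule join[OF Esph Ecl A B cA cB c0 clA clB])
  have "A \<union> M \<subseteq> span (A \<union> ?B)"
  proof
    fix y assume "y \<in> A \<union> M"
    then show "y \<in> span (A \<union> ?B)"
    proof
      assume "y \<in> A" then show ?thesis by (auto intro: span_base)
    next
      assume yM: "y \<in> M"
      obtain a where aA: "a \<in> A" and pa: "orth_proj M a = y" using proj_surj[OF A M tr yM] by blast
      have "?R a = \<sigma> *\<^sub>R (2 *\<^sub>R y - a)" using rs pa by (simp add: refl_sub_def)
      then have "\<sigma> *\<^sub>R ?R a = 2 *\<^sub>R y - a" using sg by simp
      then have ye: "y = (1/2) *\<^sub>R (\<sigma> *\<^sub>R ?R a + a)" by (simp add: algebra_simps)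
      have "?R a \<in> span (A \<union> ?B)" using aA by (auto intro: span_base)
      moreover have "a \<in> span (A \<union> ?B)" using aA by (auto intro: span_base)
      ultimately have "(1/2) *\<^sub>R (\<sigma> *\<^sub>R ?R a + a) \<in> span (A \<union> ?B)"
        by (intro span_scale span_add)
      then show ?thesis using ye by simp
    qed
  qed
  then have "span (A \<union> M) \<subseteq> span (A \<union> ?B)" by (rule span_minimal[OF _ subspace_span])
  then show ?thesis by (rule claim_mono[OF cl])
qed



lemma chain_mono:
  fixes \<alpha> :: "nat \<Rightarrow> real"
  assumes m: "\<forall>j\<in>{1..<d}. \<alpha> j < \<alpha> (Suc j)"
  shows "1 \<le> i \<Longrightarrow> i < j \<Longrightarrow> j \<le> d \<Longrightarrow> \<alpha> i < \<alpha> j"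
proof (induction j)
  case 0 then show ?case by simp
next
  case (Suc j)
  show ?case
  proof (cases "i = j")
    case True then show ?thesis using m Suc.prems by auto
  next
    case False
    then have "\<alpha> i < \<alpha> j" using Suc by auto
    moreover have "\<alpha> j < \<alpha> (Suc j)" using m Suc.prems False by auto
    ultimately show ?thesis by simp
  qed
qed

theorem theorem3p8:
  fixes H M :: "nat \<Rightarrow> 'a::euclidean_space set"
    and k i n d :: nat
    and e :: "nat \<Rightarrow> 'a"
    and \<alpha> :: "nat \<Rightarrow> real"
    and E :: "'a set"
  assumes n_def: "n = DIM('a)"
    and k_ge: "k \<ge> 3"
    and i_ge: "1 \<le> i" and i_le: "i \<le> n - 2"
    and H_sub: "\<forall>j\<in>{1..k}. subspace (H j) \<and> dim (H j) = i"
    and dM: "(2 \<le> i \<and> 2 * i \<le> n \<and> d = i \<and> (\<forall>j\<in>{1..k}. M j = H j))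
           \<or> (n < 2 * i \<and> i \<le> n - 2 \<and> d = n - i \<and> (\<forall>j\<in>{1..k}. M j = orthogonal_comp (H j)))"
    and e_orthonormal: "\<forall>a\<in>{1..n}. \<forall>b\<in>{1..n}. e a \<bullet> e b = (if a = b then 1 else 0)"
    and \<alpha>_pos: "0 < \<alpha> 1"
    and \<alpha>_mono: "\<forall>j\<in>{1..<d}. \<alpha> j < \<alpha> (Suc j)"
    and \<alpha>_lt: "\<alpha> d < pi / 2"
    and \<alpha>_indep: "pi_alphas_Q_indep d \<alpha>"
    and M1: "M 1 = span {e (2 * j - 1) | j. j \<in> {1..d}}"
    and M2: "M 2 = span {cos (\<alpha> j) *\<^sub>R e (2 * j - 1) + sin (\<alpha> j) *\<^sub>R e (2 * j) | j. j \<in> {1..d}}"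
    and M3: "M 3 = span ({cos (\<alpha> 1) *\<^sub>R e 1 + sin (\<alpha> 1) *\<^sub>R e (2 * d)}
               \<union> {cos (\<alpha> j) *\<^sub>R e (2 * j - 1) + sin (\<alpha> j) *\<^sub>R e (2 * j - 2) | j. j \<in> {2..d}})"
    and sum_all: "span (\<Union>j\<in>{1..k}. M j) = UNIV"
    and transv: "\<forall>j\<in>{3..k-1}. M (j + 1) \<inter> orthogonal_comp (span (\<Union>l\<in>{1..j}. M l)) = {0}"
    and E_sub: "E \<subseteq> sphere 0 1"
    and E_ne: "E \<noteq> {}"
    and E_closed: "closed E"
    and E_inv: "\<forall>j\<in>{1..k}. refl_sub (H j) ` E = E"
  shows "E = sphere 0 1"
proof -
  have nE: "n = DIM('a)" by (rule n_def)
  have goodH: "refl_sub (H j) x \<in> E" if "j \<in> {1..k}" "x \<in> E" for j x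
    using E_inv that by blast
  have Hs: "subspace (H j)" if "j \<in> {1..k}" for j using H_sub that by blast
  have HM: "M j = H j \<or> M j = orthogonal_comp (H j)" if "j \<in> {1..k}" for j using dM that by blast
  have Ms: "subspace (M j)" if "j \<in> {1..k}" for j
    using HM[OF that] Hs[OF that] subspace_orthogonal_comp by auto
  have dimM: "dim (M j) = d" if j: "j \<in> {1..k}" for j
  proof (cases "2 \<le> i \<and> 2 * i \<le> n \<and> d = i \<and> (\<forall>j\<in>{1..k}. M j = H j)")
    case True then show ?thesis using H_sub j by auto
  next
    case False
    then have c2: "d = n - i" "M j = orthogonal_comp (H j)" using dM j by auto
    have "dim (orthogonal_comp (H j)) + dim (H j) = n" using dim_orth_comp[OF Hs[OF j]] nE by simp
    then show ?thesis using c2 H_sub j by auto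
  qed
  have d2: "2 \<le> d" and d2n: "2 * d \<le> n" using dM i_le by auto
  have reflMM: "refl_sub (M a) (refl_sub (M b) x) \<in> E" if a: "a \<in> {1..k}" and b: "b \<in> {1..k}" and x: "x \<in> E" for a b x
  proof (cases "2 \<le> i \<and> 2 * i \<le> n \<and> d = i \<and> (\<forall>j\<in>{1..k}. M j = H j)")
    case True then show ?thesis using goodH a b x by auto
  next
    case False
    then have Ma: "M a = orthogonal_comp (H a)" and Mb: "M b = orthogonal_comp (H b)" using dM a b by auto
    have "refl_sub (M a) (refl_sub (M b) x) = refl_sub (H a) (refl_sub (H b) x)"
      unfolding Ma Mb refl_comp[OF Hs[OF a]] refl_comp[OF Hs[OF b]]
      using linear_neg[OF refl_linear[OF Hs[OF a]]] by simp
    then show ?thesis using goodH a b x by simp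
  qed
  have k3: "1 \<in> {1..k}" "2 \<in> {1..k}" "3 \<in> {1..k}" using k_ge by auto
  define J where "J = {1..d}"
  define u where "u = (\<lambda>j. e (2 * j - 1))"
  define v1 where "v1 = (\<lambda>j. e (2 * j))"
  define v2 where "v2 = (\<lambda>j. e (if j = 1 then 2 * d else 2 * j - 2))"
  have finJ: "finite J" by (simp add: J_def)
  have fr1: "frame u v1 J"
    unfolding u_def v1_def
  proof (rule frame_e[OF e_orthonormal])
    show "(\<lambda>j. 2 * j - 1) ` J \<subseteq> {1..n}" using d2n by (auto simp: J_def)
    show "(\<lambda>j. 2 * j) ` J \<subseteq> {1..n}" using d2n by (auto simp: J_def)
    show "inj_on (\<lambda>j. 2 * j - 1) J" by (auto simp: J_def inj_on_def)
    show "inj_on (\<lambda>j. 2 * j) J" by (auto simp: J_def inj_on_def)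
    show "\<And>i j. i \<in> J \<Longrightarrow> j \<in> J \<Longrightarrow> 2 * i - 1 \<noteq> 2 * j" by (auto simp: J_def) presburger
  qed
  have fr2: "frame u v2 J"
    unfolding u_def v2_def
  proof (rule frame_e[OF e_orthonormal])
    show "(\<lambda>j. 2 * j - 1) ` J \<subseteq> {1..n}" using d2n by (auto simp: J_def)
    show "(\<lambda>j. if j = 1 then 2 * d else 2 * j - 2) ` J \<subseteq> {1..n}" using d2n by (auto simp: J_def)
    show "inj_on (\<lambda>j. 2 * j - 1) J" by (auto simp: J_def inj_on_def)
    show "inj_on (\<lambda>j. if j = 1 then 2 * d else 2 * j - 2) J" by (auto simp: J_def inj_on_def split: if_splits)
    show "\<And>i j. i \<in> J \<Longrightarrow> j \<in> J \<Longrightarrow> 2 * i - 1 \<noteq> (if j = 1 then 2 * d else 2 * j - 2)"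
      by (auto simp: J_def) presburger+
  qed
  define w1 where "w1 = (\<lambda>j. cos (\<alpha> j) *\<^sub>R u j + sin (\<alpha> j) *\<^sub>R v1 j)"
  define w2 where "w2 = (\<lambda>j. cos (\<alpha> j) *\<^sub>R u j + sin (\<alpha> j) *\<^sub>R v2 j)"
  have M1': "M 1 = span (u ` J)"
  proof -
    have "{e (2 * j - 1) | j. j \<in> {1..d}} = u ` J" by (auto simp: u_def J_def)
    then show ?thesis using M1 by simp
  qed
  have M2': "M 2 = span (w1 ` J)"
  proof -
    have "{cos (\<alpha> j) *\<^sub>R e (2 * j - 1) + sin (\<alpha> j) *\<^sub>R e (2 * j) | j. j \<in> {1..d}} = w1 ` J"
      by (auto simp: w1_def u_def v1_def J_def)
    then show ?thesis using M2 by simp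
  qed
  have M3': "M 3 = span (w2 ` J)"
  proof -
    have "{cos (\<alpha> 1) *\<^sub>R e 1 + sin (\<alpha> 1) *\<^sub>R e (2 * d)}
           \<union> {cos (\<alpha> j) *\<^sub>R e (2 * j - 1) + sin (\<alpha> j) *\<^sub>R e (2 * j - 2) | j. j \<in> {2..d}} = w2 ` J"
    proof
      show "{cos (\<alpha> 1) *\<^sub>R e 1 + sin (\<alpha> 1) *\<^sub>R e (2 * d)}
           \<union> {cos (\<alpha> j) *\<^sub>R e (2 * j - 1) + sin (\<alpha> j) *\<^sub>R e (2 * j - 2) | j. j \<in> {2..d}} \<subseteq> w2 ` J"
      proof
        fix y assume "y \<in> {cos (\<alpha> 1) *\<^sub>R e 1 + sin (\<alpha> 1) *\<^sub>R e (2 * d)}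
           \<union> {cos (\<alpha> j) *\<^sub>R e (2 * j - 1) + sin (\<alpha> j) *\<^sub>R e (2 * j - 2) | j. j \<in> {2..d}}"
        then show "y \<in> w2 ` J"
        proof
          assume "y \<in> {cos (\<alpha> 1) *\<^sub>R e 1 + sin (\<alpha> 1) *\<^sub>R e (2 * d)}"
          then have "y = w2 1" by (simp add: w2_def u_def v2_def)
          moreover have "1 \<in> J" using d2 by (simp add: J_def)
          ultimately show ?thesis by blast
        next
          assume "y \<in> {cos (\<alpha> j) *\<^sub>R e (2 * j - 1) + sin (\<alpha> j) *\<^sub>R e (2 * j - 2) | j. j \<in> {2..d}}"
          then obtain j where j: "j \<in> {2..d}" "y = cos (\<alpha> j) *\<^sub>R e (2 * j - 1) + sin (\<alpha> j) *\<^sub>R e (2 * j - 2)"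
            by blast
          then have "y = w2 j" by (simp add: w2_def u_def v2_def)
          moreover have "j \<in> J" using j by (simp add: J_def)
          ultimately show ?thesis by blast
        qed
      qed
    next
      show "w2 ` J \<subseteq> {cos (\<alpha> 1) *\<^sub>R e 1 + sin (\<alpha> 1) *\<^sub>R e (2 * d)}
           \<union> {cos (\<alpha> j) *\<^sub>R e (2 * j - 1) + sin (\<alpha> j) *\<^sub>R e (2 * j - 2) | j. j \<in> {2..d}}"
      proof
        fix y assume "y \<in> w2 ` J"
        then obtain j where j: "j \<in> J" "y = w2 j" by blast
        show "y \<in> {cos (\<alpha> 1) *\<^sub>R e 1 + sin (\<alpha> 1) *\<^sub>R e (2 * d)}
           \<union> {cos (\<alpha> j) *\<^sub>R e (2 * j - 1) + sin (\<alpha> j) *\<^sub>R e (2 * j - 2) | j. j \<in> {2..d}}"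
        proof (cases "j = 1")
          case True then show ?thesis using j by (simp add: w2_def u_def v2_def)
        next
          case False
          then have "j \<in> {2..d}" using j by (auto simp: J_def)
          then show ?thesis using j False by (auto simp: w2_def u_def v2_def)
        qed
      qed
    qed
    then show ?thesis using M3 by simp
  qed
  have mono: "\<alpha> i < \<alpha> j" if "i \<in> {1..d}" "j \<in> {1..d}" "i < j" for i j
    using chain_mono[OF \<alpha>_mono] that by auto
  have bnd: "0 < \<alpha> j \<and> \<alpha> j < pi / 2" if j: "j \<in> {1..d}" for j
  proof -
    have "\<alpha> 1 \<le> \<alpha> j" using mono[of 1 j] j by (cases "j = 1") auto
    moreover have "\<alpha> j \<le> \<alpha> d" using mono[of j d] j by (cases "j = d") auto
    ultimately show ?thesis using \<alpha>_pos \<alpha>_lt by auto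
  qed
  have kr: "\<exists>k::int. \<exists>m::nat \<Rightarrow> int. \<forall>j\<in>J. \<bar>of_int k * (2 * \<alpha> j) + 2 * pi * of_int (m j) - phi j\<bar> < ee"
    if "ee > 0" for phi ee
    unfolding J_def by (rule kron[OF \<alpha>_indep mono bnd that])
  have cl1: "claim E (span {u j, v1 j})" if "j \<in> J" for j
  proof (rule frame_claims[OF E_closed finJ fr1 _ _ kr that])
    fix x assume x: "x \<in> E"
    show "refl_sub (span (u ` J)) (refl_sub (span ((\<lambda>j. cos (\<alpha> j) *\<^sub>R u j + sin (\<alpha> j) *\<^sub>R v1 j) ` J)) x) \<in> E"
      using reflMM[OF k3(1) k3(2) x] M1' M2' unfolding w1_def by simp
    show "refl_sub (span ((\<lambda>j. cos (\<alpha> j) *\<^sub>R u j + sin (\<alpha> j) *\<^sub>R v1 j) ` J)) (refl_sub (span (u ` J)) x) \<in> E"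
      using reflMM[OF k3(2) k3(1) x] M1' M2' unfolding w1_def by simp
  qed simp
  have cl2: "claim E (span {u j, v2 j})" if "j \<in> J" for j
  proof (rule frame_claims[OF E_closed finJ fr2 _ _ kr that])
    fix x assume x: "x \<in> E"
    show "refl_sub (span (u ` J)) (refl_sub (span ((\<lambda>j. cos (\<alpha> j) *\<^sub>R u j + sin (\<alpha> j) *\<^sub>R v2 j) ` J)) x) \<in> E"
      using reflMM[OF k3(1) k3(3) x] M1' M3' unfolding w2_def by simp
    show "refl_sub (span ((\<lambda>j. cos (\<alpha> j) *\<^sub>R u j + sin (\<alpha> j) *\<^sub>R v2 j) ` J)) (refl_sub (span (u ` J)) x) \<in> E"
      using reflMM[OF k3(3) k3(1) x] M1' M3' unfolding w2_def by simp
  qed simp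
  have eon: "e a \<bullet> e b = (if a = b then 1 else 0)" if "a \<in> {1..n}" "b \<in> {1..n}" for a b
    using e_orthonormal that by blast
  have chain: "claim E (span (e ` {1..m}))" if "2 \<le> m" "m \<le> 2 * d" for m
    using that
  proof (induction m)
    case 0 then show ?case by simp
  next
    case (Suc m)
    show ?case
    proof (cases "Suc m = 2")
      case True
      have "1 \<in> J" using d2 by (simp add: J_def)
      then have "claim E (span {u 1, v1 1})" by (rule cl1)
      moreover have "{1..Suc m} = {1, 2}" using True by auto
      then have "{u 1, v1 1} = e ` {1..Suc m}" by (simp add: u_def v1_def)
      ultimately show ?thesis by simp
    next
      case False
      then have m2: "2 \<le> m" "m \<le> 2 * d" using Suc.prems by auto
      have IH: "claim E (span (e ` {1..m}))" using Suc.IH m2 by blast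
      have P: "claim E (span {e m, e (Suc m)})"
      proof (cases "odd m")
        case True
        define j where "j = (m + 1) div 2"
        have jJ: "j \<in> J" using True Suc.prems unfolding j_def J_def by (auto; presburger)
        have "2 * j - 1 = m" "2 * j = Suc m" using True unfolding j_def by presburger+
        then have "u j = e m" "v1 j = e (Suc m)" by (simp_all add: u_def v1_def)
        then show ?thesis using cl1[OF jJ] by simp
      next
        case False
        define j where "j = (m + 2) div 2"
        have jJ: "j \<in> J" using False Suc.prems m2 unfolding j_def J_def by (auto; presburger)
        have j1: "j \<noteq> 1" using m2 unfolding j_def by auto
        have "2 * j - 1 = Suc m" "2 * j - 2 = m" using False m2 unfolding j_def by presburger+
        then have "u j = e (Suc m)" "v2 j = e m" using j1 by (simp_all add: u_def v2_def)
        then have "claim E (span {e (Suc m), e m})" using cl2[OF jJ] by simp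
        then show ?thesis by (simp add: insert_commute)
      qed
      have mn: "m \<in> {1..n}" using m2 d2n by auto
      have cA: "e m \<in> span (e ` {1..m})" using m2 by (intro span_base) auto
      have cB: "e m \<in> span {e m, e (Suc m)}" by (intro span_base) auto
      have c0: "e m \<noteq> 0" using eon[OF mn mn] by auto
      have J: "claim E (span (span (e ` {1..m}) \<union> span {e m, e (Suc m)}))"
        by (rule join[OF E_sub E_closed subspace_span subspace_span cA cB c0 IH P])
      have "e ` {1..Suc m} \<subseteq> span (e ` {1..m}) \<union> span {e m, e (Suc m)}"
      proof
        fix y assume "y \<in> e ` {1..Suc m}"
        then obtain a where a: "a \<in> {1..Suc m}" "y = e a" by blast
        show "y \<in> span (e ` {1..m}) \<union> span {e m, e (Suc m)}"
        proof (cases "a = Suc m")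
          case True then show ?thesis using a by (auto intro: span_base)
        next
          case False then show ?thesis using a by (auto intro: span_base)
        qed
      qed
      then have "span (e ` {1..Suc m}) \<subseteq> span (span (e ` {1..m}) \<union> span {e m, e (Suc m)})"
        by (rule span_mono)
      then show ?thesis by (rule claim_mono[OF J])
    qed
  qed
  define S where "S = span (e ` {1..2 * d})"
  have clS: "claim E S" unfolding S_def using chain d2 by simp
  define L where "L = (\<lambda>j. span (\<Union>l\<in>{1..j}. M l))"
  have eS: "e a \<in> S" if "a \<in> {1..2 * d}" for a unfolding S_def using that by (intro span_base) auto
  have uS: "u j \<in> S" if "j \<in> J" for j unfolding u_def using that by (intro eS) (auto simp: J_def)
  have v1S: "v1 j \<in> S" if "j \<in> J" for j unfolding v1_def using that by (intro eS) (auto simp: J_def)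
  have v2S: "v2 j \<in> S" if "j \<in> J" for j unfolding v2_def
    using that d2 by (intro eS) (auto simp: J_def)
  have subS: "subspace S" unfolding S_def by (rule subspace_span)
  have L3S: "L 3 \<subseteq> S"
  proof -
    have "M 1 \<subseteq> S" unfolding M1' using uS by (intro span_minimal[OF _ subS]) auto
    moreover have "M 2 \<subseteq> S" unfolding M2' w1_def using uS v1S
      by (intro span_minimal[OF _ subS]) (auto intro!: subspace_add[OF subS] subspace_scale[OF subS])
    moreover have "M 3 \<subseteq> S" unfolding M3' w2_def using uS v2S
      by (intro span_minimal[OF _ subS]) (auto intro!: subspace_add[OF subS] subspace_scale[OF subS])
    moreover have "{1..3::nat} = {1, 2, 3}" by auto
    ultimately have "(\<Union>l\<in>{1..3}. M l) \<subseteq> S" by auto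
    then show ?thesis unfolding L_def by (rule span_minimal[OF _ subS])
  qed
  have SL3: "S \<subseteq> L 3"
  proof -
    have U3: "(\<Union>l\<in>{1..3}. M l) \<subseteq> L 3" unfolding L_def by (rule span_superset)
    have a1: "M 1 \<subseteq> (\<Union>l\<in>{1..3}. M l)" and a2: "M 2 \<subseteq> (\<Union>l\<in>{1..3}. M l)" by force+
    have M1L: "M 1 \<subseteq> L 3" by (rule subset_trans[OF a1 U3])
    have M2L: "M 2 \<subseteq> L 3" by (rule subset_trans[OF a2 U3])
    have subL3: "subspace (L 3)" unfolding L_def by (rule subspace_span)
    have "e a \<in> L 3" if a: "a \<in> {1..2 * d}" for a
    proof (cases "odd a")
      case True
      define j where "j = (a + 1) div 2"
      have jJ: "j \<in> J" using True a unfolding j_def J_def by (auto; presburger)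
      have "2 * j - 1 = a" using True unfolding j_def by presburger
      then have "e a = u j" unfolding u_def by simp
      moreover have "u j \<in> M 1" unfolding M1' using jJ by (auto intro: span_base)
      ultimately show ?thesis using M1L by auto
    next
      case False
      define j where "j = a div 2"
      have jJ: "j \<in> J" using False a unfolding j_def J_def by (auto; presburger)
      have ea: "e a = v1 j" using False unfolding j_def v1_def by simp
      have s0: "sin (\<alpha> j) \<noteq> 0"
      proof -
        have "0 < \<alpha> j" "\<alpha> j < pi" using bnd[of j] jJ pi_gt_zero by (auto simp: J_def)
        then show ?thesis using sin_gt_zero by fastforce
      qed
      have veq: "v1 j = (1 / sin (\<alpha> j)) *\<^sub>R (w1 j - cos (\<alpha> j) *\<^sub>R u j)"
        using s0 by (simp add: w1_def)
      have wL: "w1 j \<in> L 3" using M2L jJ unfolding M2' by (auto intro: span_base)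
      have uL: "u j \<in> L 3" using M1L jJ unfolding M1' by (auto intro: span_base)
      have "w1 j - cos (\<alpha> j) *\<^sub>R u j \<in> L 3"
        by (rule subspace_diff[OF subL3 wL subspace_scale[OF subL3 uL]])
      then have "(1 / sin (\<alpha> j)) *\<^sub>R (w1 j - cos (\<alpha> j) *\<^sub>R u j) \<in> L 3"
        by (rule subspace_scale[OF subL3])
      then have "v1 j \<in> L 3" using veq by simp
      then show ?thesis using ea by simp
    qed
    then show ?thesis unfolding S_def by (intro span_minimal) (auto simp: L_def)
  qed
  have dimS: "dim S = 2 * d"
  proof -
    have inj: "inj_on e {1..2 * d}"
    proof (rule inj_onI)
      fix a b assume a: "a \<in> {1..2 * d}" and b: "b \<in> {1..2 * d}" and ab: "e a = e b"
      have "a \<in> {1..n}" "b \<in> {1..n}" using a b d2n by auto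
      then show "a = b" using eon[of a b] eon[of b b] ab by (auto split: if_splits)
    qed
    have ind: "independent (e ` {1..2 * d})"
    proof (rule pairwise_orthogonal_independent)
      show "pairwise orthogonal (e ` {1..2 * d})"
        unfolding pairwise_def
      proof (intro ballI impI)
        fix x y assume "x \<in> e ` {1..2 * d}" "y \<in> e ` {1..2 * d}" "x \<noteq> y"
        then obtain a b where ab: "a \<in> {1..2 * d}" "b \<in> {1..2 * d}" "x = e a" "y = e b" by blast
        with \<open>x \<noteq> y\<close> have "a \<noteq> b" by blast
        moreover have "a \<in> {1..n}" "b \<in> {1..n}" using ab d2n by auto
        ultimately show "orthogonal x y" using eon[of a b] ab by (simp add: orthogonal_def)
      qed
      show "0 \<notin> e ` {1..2 * d}"
      proof
        assume "0 \<in> e ` {1..2 * d}"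
        then obtain a where "a \<in> {1..2 * d}" "e a = 0" by auto
        then show False using eon[of a a] d2n by auto
      qed
    qed
    have "dim S = card (e ` {1..2 * d})" unfolding S_def by (rule dim_span_eq_card_independent[OF ind])
    also have "\<dots> = 2 * d" using card_image[OF inj] by simp
    finally show ?thesis .
  qed
  have L3L: "L 3 \<subseteq> L j" if "3 \<le> j" for j
    unfolding L_def
  proof (intro span_mono)
    show "(\<Union>l\<in>{1..3}. M l) \<subseteq> (\<Union>l\<in>{1..j}. M l)"
      using that by (intro UN_mono) auto
  qed
  have subL: "subspace (L j)" for j unfolding L_def by (rule subspace_span)
  have clL: "claim E (L j)" if "3 \<le> j" "j \<le> k" for j
    using that
  proof (induction j)
    case 0 then show ?case by simp
  next
    case (Suc j)
    show ?case
    proof (cases "Suc j = 3")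
      case True
      then show ?thesis using claim_mono[OF clS L3S] by simp
    next
      case False
      then have j3: "3 \<le> j" "j \<le> k" using Suc.prems by auto
      have IH: "claim E (L j)" using Suc.IH j3 by blast
      have sj: "Suc j \<in> {1..k}" using Suc.prems by auto
      have "dim (M (Suc j)) = d" by (rule dimM[OF sj])
      moreover have "2 * d \<le> dim (L j)"
        using dimS dim_subset[OF subset_trans[OF SL3 L3L[OF j3(1)]]] by simp
      ultimately have lt: "dim (M (Suc j)) < dim (L j)" using d2 by simp
      have tr: "M (Suc j) \<inter> orthogonal_comp (L j) = {0}"
        using transv j3 Suc.prems unfolding L_def by auto
      have cl: "claim E (span (L j \<union> M (Suc j)))"
        by (rule ext_step[OF E_sub E_closed subL Hs[OF sj] HM[OF sj] IH goodH[OF sj] lt tr])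
      have "(\<Union>l\<in>{1..Suc j}. M l) \<subseteq> L j \<union> M (Suc j)"
      proof
        fix y assume "y \<in> (\<Union>l\<in>{1..Suc j}. M l)"
        then obtain l where l: "l \<in> {1..Suc j}" "y \<in> M l" by blast
        show "y \<in> L j \<union> M (Suc j)"
        proof (cases "l = Suc j")
          case True then show ?thesis using l by simp
        next
          case False
          then have "y \<in> (\<Union>l\<in>{1..j}. M l)" using l by auto
          then show ?thesis unfolding L_def by (auto intro: span_base)
        qed
      qed
      then have "L (Suc j) \<subseteq> span (L j \<union> M (Suc j))" unfolding L_def by (rule span_mono)
      then show ?thesis by (rule claim_mono[OF cl])
    qed
  qed
  have "claim E (L k)" by (rule clL) (use k_ge in auto)
  then have clU: "claim E UNIV" using sum_all by (simp add: L_def)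
  show ?thesis
  proof
    show "E \<subseteq> sphere 0 1" by (rule E_sub)
    show "sphere 0 1 \<subseteq> E"
    proof
      fix y :: 'a assume y: "y \<in> sphere 0 1"
      obtain x where x: "x \<in> E" using E_ne by blast
      have "norm y = norm x" using x y E_sub by auto
      then show "y \<in> E" using claimD[OF clU x] by simp
    qed
  qed
qed

end
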